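(* Let a group $G$ act on a real tree $T$ and let $g,h\in G$ be such that $\langle g,h\rangle$ acts irreducibly on $T$. Suppose that $g$ is either elliptic or equal to $g_0^m$ for some weakly $\lambda$-stable hyperbolic element $g_0$ and some integer $m\ge10\max\{\lambda,1\}$ (with $\lambda>0$), and make the same assumption on $h$. Then the pair $\{g,h\}$ is acylindrical.
   Context: For an isometry $g$: $tl(g)=\inf_p d(p,gp)$; elliptic means having a fixed point, hyperbolic otherwise; $A(g)$ is the fixed set or translation axis. $E(f)$: elements preserving $A(f)$ setwise. Hyperbolic $h$ is weakly $\lambda$-stable if for all $g\in G$, $|A(h)\cap gA(h)|>\lambda tl(h)$ implies $g\in E(h)$. An action is abelian if $tl(gh)\le tl(g)+tl(h)$ for all $g,h$; dihedral if not abelian but this inequality holds for all pairs of hyperbolic elements; irreducible if neither. A pair $g,h$ is acylindrical if $\langle g,h\rangle$ acts irreducibly on $T$, $|A(g)\cap A(h)|\le\frac12\max\{tl(g),tl(h)\}$, and each of $g,h$ that is hyperbolic is weakly $\frac13$-stable. *)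

theory Defs
  imports "HOL-Analysis.Analysis" "HOL-Algebra.Group_Action" "HOL-Algebra.Generated_Groups"
begin

definition real_tree :: "'a::metric_space set \<Rightarrow> bool" where
  "real_tree T \<longleftrightarrow> T \<noteq> {} \<and>
     (\<forall>x\<in>T. \<forall>y\<in>T. \<exists>\<gamma>::real \<Rightarrow> 'a.
        \<gamma> 0 = x \<and> \<gamma> (dist x y) = y \<and> \<gamma> ` {0..dist x y} \<subseteq> T \<and>
        (\<forall>s\<in>{0..dist x y}. \<forall>t\<in>{0..dist x y}. dist (\<gamma> s) (\<gamma> t) = \<bar>s - t\<bar>) \<and>
        (\<forall>c::real \<Rightarrow> 'a. arc c \<and> pathstart c = x \<and> pathfinish c = y \<and> path_image c \<subseteq> T
             \<longrightarrow> path_image c = \<gamma> ` {0..dist x y}))"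

definition isometric_action :: "('g, 'm) monoid_scheme \<Rightarrow> 'a::metric_space set \<Rightarrow> ('g \<Rightarrow> 'a \<Rightarrow> 'a) \<Rightarrow> bool" where
  "isometric_action G T \<phi> \<longleftrightarrow> group G \<and> group_action G T \<phi> \<and>
     (\<forall>g\<in>carrier G. \<forall>x\<in>T. \<forall>y\<in>T. dist (\<phi> g x) (\<phi> g y) = dist x y)"

definition trans_len :: "'a::metric_space set \<Rightarrow> ('g \<Rightarrow> 'a \<Rightarrow> 'a) \<Rightarrow> 'g \<Rightarrow> real" where
  "trans_len T \<phi> g = Inf ((\<lambda>p. dist p (\<phi> g p)) ` T)"

definition elliptic :: "'a::metric_space set \<Rightarrow> ('g \<Rightarrow> 'a \<Rightarrow> 'a) \<Rightarrow> 'g \<Rightarrow> bool" where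
  "elliptic T \<phi> g \<longleftrightarrow> (\<exists>p\<in>T. \<phi> g p = p)"

definition hyperbolic :: "'a::metric_space set \<Rightarrow> ('g \<Rightarrow> 'a \<Rightarrow> 'a) \<Rightarrow> 'g \<Rightarrow> bool" where
  "hyperbolic T \<phi> g \<longleftrightarrow> \<not> elliptic T \<phi> g"

text \<open>Characteristic set A(g): the fixed set of an elliptic element, resp. the translation
  axis of a hyperbolic element; in both cases it is the set of points moved by exactly tl(g).\<close>
definition char_set :: "'a::metric_space set \<Rightarrow> ('g \<Rightarrow> 'a \<Rightarrow> 'a) \<Rightarrow> 'g \<Rightarrow> 'a set" where
  "char_set T \<phi> g = {p\<in>T. dist p (\<phi> g p) = trans_len T \<phi> g}"

definition tree_length :: "'a::metric_space set \<Rightarrow> ereal" where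
  "tree_length S = (if S = {} then 0 else (SUP x\<in>S. SUP y\<in>S. ereal (dist x y)))"

definition stab_axis :: "('g, 'm) monoid_scheme \<Rightarrow> 'a::metric_space set \<Rightarrow> ('g \<Rightarrow> 'a \<Rightarrow> 'a) \<Rightarrow> 'g \<Rightarrow> 'g set" where
  "stab_axis G T \<phi> f = {g\<in>carrier G. \<phi> g ` char_set T \<phi> f = char_set T \<phi> f}"

definition weakly_stable :: "('g, 'm) monoid_scheme \<Rightarrow> 'a::metric_space set \<Rightarrow> ('g \<Rightarrow> 'a \<Rightarrow> 'a) \<Rightarrow> real \<Rightarrow> 'g \<Rightarrow> bool" where
  "weakly_stable G T \<phi> lam h \<longleftrightarrow> hyperbolic T \<phi> h \<and>
     (\<forall>g\<in>carrier G. tree_length (char_set T \<phi> h \<inter> \<phi> g ` char_set T \<phi> h) > ereal (lam * trans_len T \<phi> h)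
        \<longrightarrow> g \<in> stab_axis G T \<phi> h)"

definition abelian_on :: "('g, 'm) monoid_scheme \<Rightarrow> 'a::metric_space set \<Rightarrow> ('g \<Rightarrow> 'a \<Rightarrow> 'a) \<Rightarrow> 'g set \<Rightarrow> bool" where
  "abelian_on G T \<phi> H \<longleftrightarrow> (\<forall>g\<in>H. \<forall>h\<in>H.
      trans_len T \<phi> (g \<otimes>\<^bsub>G\<^esub> h) \<le> trans_len T \<phi> g + trans_len T \<phi> h)"

definition dihedral_on :: "('g, 'm) monoid_scheme \<Rightarrow> 'a::metric_space set \<Rightarrow> ('g \<Rightarrow> 'a \<Rightarrow> 'a) \<Rightarrow> 'g set \<Rightarrow> bool" where
  "dihedral_on G T \<phi> H \<longleftrightarrow> \<not> abelian_on G T \<phi> H \<and>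
     (\<forall>g\<in>H. \<forall>h\<in>H. hyperbolic T \<phi> g \<longrightarrow> hyperbolic T \<phi> h \<longrightarrow>
      trans_len T \<phi> (g \<otimes>\<^bsub>G\<^esub> h) \<le> trans_len T \<phi> g + trans_len T \<phi> h)"

definition irreducible_on :: "('g, 'm) monoid_scheme \<Rightarrow> 'a::metric_space set \<Rightarrow> ('g \<Rightarrow> 'a \<Rightarrow> 'a) \<Rightarrow> 'g set \<Rightarrow> bool" where
  "irreducible_on G T \<phi> H \<longleftrightarrow> \<not> abelian_on G T \<phi> H \<and> \<not> dihedral_on G T \<phi> H"

definition acylindrical_pair :: "('g, 'm) monoid_scheme \<Rightarrow> 'a::metric_space set \<Rightarrow> ('g \<Rightarrow> 'a \<Rightarrow> 'a) \<Rightarrow> 'g \<Rightarrow> 'g \<Rightarrow> bool" where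
  "acylindrical_pair G T \<phi> g h \<longleftrightarrow>
     irreducible_on G T \<phi> (generate G {g, h}) \<and>
     tree_length (char_set T \<phi> g \<inter> char_set T \<phi> h)
        \<le> ereal (max (trans_len T \<phi> g) (trans_len T \<phi> h) / 2) \<and>
     (hyperbolic T \<phi> g \<longrightarrow> weakly_stable G T \<phi> (1/3) g) \<and>
     (hyperbolic T \<phi> h \<longrightarrow> weakly_stable G T \<phi> (1/3) h)"

end

theory Submission
  imports Defs
begin

definition btw :: "'a::metric_space \<Rightarrow> 'a \<Rightarrow> 'a \<Rightarrow> bool" where
  "btw x z y \<longleftrightarrow> dist x z + dist z y = dist x y"

lemma btw_sym: "btw x z y \<Longrightarrow> btw y z x"
  unfolding btw_def by (simp add: dist_commute add.commute)

lemma btw_refl1[simp]: "btw x x y" and btw_refl2[simp]: "btw x y y"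
  unfolding btw_def by simp_all

lemma btw_nest:
  assumes "btw a w b" "btw a q w"
  shows "btw a q b" "btw q w b"
proof -
  have t1: "dist q b \<le> dist q w + dist w b" by (rule dist_triangle)
  have t2: "dist a b \<le> dist a q + dist q b" by (rule dist_triangle)
  have t3: "dist q b \<le> dist q w + dist w b" by (rule dist_triangle)
  have t4: "dist a w \<le> dist a q + dist q w" by (rule dist_triangle)
  have t5: "dist w b \<le> dist w q + dist q b" by (rule dist_triangle)
  have c: "dist w q = dist q w" by (rule dist_commute)
  show "btw a q b" "btw q w b" using assms t1 t2 t5 c unfolding btw_def by linarith+
qed

lemma btw_ext:
  assumes "btw a p b" "btw a b z"
  shows "btw p b z" "btw a p z"
proof -
  have t1: "dist a z \<le> dist a p + dist p z" by (rule dist_triangle)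
  have t2: "dist p z \<le> dist p b + dist b z" by (rule dist_triangle)
  show "btw p b z" "btw a p z" using assms t1 t2 unfolding btw_def by linarith+
qed

lemma btw_comp:
  assumes "btw a b e" "btw b z e"
  shows "btw a b z" "btw a z e" "dist a z = dist a b + dist b z"
proof -
  have t1: "dist a z \<le> dist a b + dist b z" by (rule dist_triangle)
  have t2: "dist a e \<le> dist a z + dist z e" by (rule dist_triangle)
  show "btw a b z" "btw a z e" "dist a z = dist a b + dist b z" using assms t1 t2 unfolding btw_def by linarith+
qed

definition geo_prop :: "'a::metric_space set \<Rightarrow> 'a \<Rightarrow> 'a \<Rightarrow> (real \<Rightarrow> 'a) \<Rightarrow> bool" where
  "geo_prop T x y \<gamma> \<longleftrightarrow> \<gamma> 0 = x \<and> \<gamma> (dist x y) = y \<and> \<gamma> ` {0..dist x y} \<subseteq> T \<and>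
        (\<forall>s\<in>{0..dist x y}. \<forall>t\<in>{0..dist x y}. dist (\<gamma> s) (\<gamma> t) = \<bar>s - t\<bar>) \<and>
        (\<forall>c::real \<Rightarrow> 'a. arc c \<and> pathstart c = x \<and> pathfinish c = y \<and> path_image c \<subseteq> T
             \<longrightarrow> path_image c = \<gamma> ` {0..dist x y})"

locale rtree =
  fixes T :: "'a::metric_space set"
  assumes rt: "real_tree T"
begin

definition geo :: "'a \<Rightarrow> 'a \<Rightarrow> real \<Rightarrow> 'a" where
  "geo x y = (SOME \<gamma>. geo_prop T x y \<gamma>)"

lemma geo: assumes "x \<in> T" "y \<in> T" shows "geo_prop T x y (geo x y)"
proof -
  have "\<exists>\<gamma>. geo_prop T x y \<gamma>" using rt assms unfolding real_tree_def geo_prop_def by blast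
  then show ?thesis unfolding geo_def by (rule someI_ex)
qed

lemma geo_basic:
  assumes "x \<in> T" "y \<in> T"
  shows "geo x y 0 = x" "geo x y (dist x y) = y" "\<And>s. s \<in> {0..dist x y} \<Longrightarrow> geo x y s \<in> T"
    "\<And>s t. s \<in> {0..dist x y} \<Longrightarrow> t \<in> {0..dist x y} \<Longrightarrow> dist (geo x y s) (geo x y t) = \<bar>s - t\<bar>"
    "\<And>c. arc c \<Longrightarrow> pathstart c = x \<Longrightarrow> pathfinish c = y \<Longrightarrow> path_image c \<subseteq> T
             \<Longrightarrow> path_image c = geo x y ` {0..dist x y}"
  using geo[OF assms] unfolding geo_prop_def by blast+

lemma geo_pt:
  assumes "x \<in> T" "y \<in> T" "0 \<le> s" "s \<le> dist x y"
  shows "geo x y s \<in> T" "dist x (geo x y s) = s" "dist (geo x y s) y = dist x y - s"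
    "btw x (geo x y s) y"
proof -
  have s: "s \<in> {0..dist x y}" using assms by auto
  have z: "0 \<in> {0..dist x y}" "dist x y \<in> {0..dist x y}" using assms by auto
  show "geo x y s \<in> T" using geo_basic(3)[OF assms(1,2) s] .
  show a: "dist x (geo x y s) = s" using geo_basic(4)[OF assms(1,2) z(1) s] geo_basic(1)[OF assms(1,2)] assms by simp
  show b: "dist (geo x y s) y = dist x y - s" using geo_basic(4)[OF assms(1,2) s z(2)] geo_basic(2)[OF assms(1,2)] assms by simp
  show "btw x (geo x y s) y" using a b unfolding btw_def by simp
qed

lemma geo_img_btw:
  assumes "x \<in> T" "y \<in> T" "u \<in> geo x y ` {0..dist x y}"
  shows "btw x u y" "u \<in> T"
proof -
  obtain s where s: "s \<in> {0..dist x y}" "u = geo x y s" using assms(3) by blast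
  then show "btw x u y" "u \<in> T" using geo_pt[OF assms(1,2), of s] by auto
qed

definition gpath :: "'a \<Rightarrow> 'a \<Rightarrow> real \<Rightarrow> 'a" where
  "gpath x y = (\<lambda>t. geo x y (t * dist x y))"

lemma scale_img: assumes "(d::real) > 0" shows "(\<lambda>t. t * d) ` {0..1} = {0..d}"
proof
  show "(\<lambda>t. t * d) ` {0..1} \<subseteq> {0..d}" using assms by (auto simp: mult_le_cancel_right1)
  show "{0..d} \<subseteq> (\<lambda>t. t * d) ` {0..1}"
  proof
    fix u assume "u \<in> {0..d}"
    then have "u = (u/d) * d" "u/d \<in> {0..1}" using assms by auto
    then show "u \<in> (\<lambda>t. t * d) ` {0..1}" by blast
  qed
qed

lemma gpath_props:
  assumes "x \<in> T" "y \<in> T" "x \<noteq> y"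
  shows "arc (gpath x y)" "pathstart (gpath x y) = x" "pathfinish (gpath x y) = y"
    "path_image (gpath x y) = geo x y ` {0..dist x y}"
proof -
  let ?d = "dist x y"
  have d: "?d > 0" using assms by simp
  show img: "path_image (gpath x y) = geo x y ` {0..dist x y}"
    unfolding path_image_def gpath_def using scale_img[OF d] by (metis image_image)
  show "pathstart (gpath x y) = x" unfolding pathstart_def gpath_def using geo_basic[OF assms(1,2)] by simp
  show "pathfinish (gpath x y) = y" unfolding pathfinish_def gpath_def using geo_basic[OF assms(1,2)] by simp
  have cont: "continuous_on {0..?d} (geo x y)"
    unfolding continuous_on_iff
  proof (intro ballI allI impI)
    fix s e assume "s \<in> {0..?d}" "(e::real) > 0"
    then show "\<exists>d>0. \<forall>t\<in>{0..?d}. dist t s < d \<longrightarrow> dist (geo x y t) (geo x y s) < e"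
      using geo_basic(4)[OF assms(1,2)] by (intro exI[of _ e]) (auto simp: dist_real_def)
  qed
  have "continuous_on {0..1} (\<lambda>t. t * ?d)" by (intro continuous_intros)
  then have "continuous_on {0..1} (geo x y \<circ> (\<lambda>t. t * ?d))"
    by (rule continuous_on_compose) (use cont scale_img[OF d] in simp)
  then have p: "path (gpath x y)" unfolding path_def gpath_def by (simp add: o_def)
  have "inj_on (gpath x y) {0..1}"
  proof (rule inj_onI)
    fix s t assume st: "s \<in> {0..1}" "t \<in> {0..1}" "gpath x y s = gpath x y t"
    have "s * ?d \<in> {0..?d}" "t * ?d \<in> {0..?d}" using st(1,2) scale_img[OF d] by blast+
    then have "\<bar>s * ?d - t * ?d\<bar> = 0" using geo_basic(4)[OF assms(1,2)] st(3) unfolding gpath_def by (metis dist_self)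
    then show "s = t" using d by simp
  qed
  then show "arc (gpath x y)" using p unfolding arc_def by simp
qed

lemma J:
  assumes "x \<in> T" "w \<in> T" "z \<in> T" "w \<noteq> x" "w \<noteq> z"
    and nb: "\<And>u. btw x u w \<Longrightarrow> btw w u z \<Longrightarrow> u \<in> T \<Longrightarrow> u = w"
  shows "w \<in> geo x z ` {0..dist x z}"
proof -
  let ?p = "gpath x w +++ gpath w z"
  have P1: "arc (gpath x w)" "pathstart (gpath x w) = x" "pathfinish (gpath x w) = w"
    "path_image (gpath x w) = geo x w ` {0..dist x w}"
    using gpath_props[OF assms(1,2)] assms(4) by auto
  have P2: "arc (gpath w z)" "pathstart (gpath w z) = w" "pathfinish (gpath w z) = z"
    "path_image (gpath w z) = geo w z ` {0..dist w z}"
    using gpath_props[OF assms(2,3) assms(5)] by auto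
  have e: "pathfinish (gpath x w) = pathstart (gpath w z)" using P1 P2 by simp
  have i: "path_image (gpath x w) \<inter> path_image (gpath w z) \<subseteq> {pathstart (gpath w z)}"
  proof
    fix u assume u: "u \<in> path_image (gpath x w) \<inter> path_image (gpath w z)"
    have "btw x u w" "u \<in> T" using geo_img_btw[OF assms(1,2)] u P1(4) by auto
    moreover have "btw w u z" using geo_img_btw[OF assms(2,3)] u P2(4) by auto
    ultimately have "u = w" using nb by blast
    then show "u \<in> {pathstart (gpath w z)}" using P2(2) by simp
  qed
  have arc: "arc ?p" using arc_join[OF P1(1) P2(1) e i] .
  have img: "path_image ?p = path_image (gpath x w) \<union> path_image (gpath w z)"
    using path_image_join[OF e] .
  have s1: "path_image (gpath x w) \<subseteq> T" using geo_img_btw(2)[OF assms(1,2)] P1(4) by blast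
  have s2: "path_image (gpath w z) \<subseteq> T" using geo_img_btw(2)[OF assms(2,3)] P2(4) by blast
  have sub: "path_image ?p \<subseteq> T" unfolding img using s1 s2 by blast
  have st: "pathstart ?p = x" "pathfinish ?p = z" using P1 P2 by simp_all
  have "path_image ?p = geo x z ` {0..dist x z}"
    using geo_basic(5)[OF assms(1,3) arc st sub] .
  moreover have "w \<in> path_image ?p" unfolding img using pathfinish_in_path_image[of "gpath x w"] P1(3) by simp
  ultimately show ?thesis by simp
qed

lemma seg_param:
  assumes "x \<in> T" "w \<in> T" "z \<in> T" "btw x w z"
  shows "w = geo x z (dist x w)"
proof (cases "w = x \<or> w = z")
  case True
  then show ?thesis using geo_basic[OF assms(1,3)] by auto
next
  case False
  have "w \<in> geo x z ` {0..dist x z}"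
  proof (rule J)
    fix u assume "btw x u w" "btw w u z"
    then have "dist x u + dist u w = dist x w" "dist w u + dist u z = dist w z" unfolding btw_def by auto
    moreover have "dist x z \<le> dist x u + dist u z" by (rule dist_triangle)
    moreover have "dist u w = dist w u" by (rule dist_commute)
    moreover have "dist u w \<ge> 0" by simp
    ultimately have "dist u w = 0" using assms(4) unfolding btw_def by linarith
    then show "u = w" by simp
  next
    show "x \<in> T" "w \<in> T" "z \<in> T" using assms by -
    show "w \<noteq> x" "w \<noteq> z" using False by auto
  qed
  then obtain t where t: "t \<in> {0..dist x z}" "w = geo x z t" by auto
  then have "dist x w = t" using geo_pt[OF assms(1,3)] by auto
  then show ?thesis using t by simp
qed

lemma uniq:
  assumes "x \<in> T" "y \<in> T" "z1 \<in> T" "z2 \<in> T" "btw x z1 y" "btw x z2 y" "dist x z1 = dist x z2"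
  shows "z1 = z2"
  using seg_param[OF assms(1,3,2,5)] seg_param[OF assms(1,4,2,6)] assms(7) by simp

lemma exist:
  assumes "x \<in> T" "y \<in> T" "0 \<le> s" "s \<le> dist x y"
  obtains z where "z \<in> T" "btw x z y" "dist x z = s"
  using geo_pt[OF assms] by blast

lemma NB:
  assumes "x \<in> T" "w \<in> T" "z \<in> T"
    and nb: "\<And>u. btw x u w \<Longrightarrow> btw w u z \<Longrightarrow> u \<in> T \<Longrightarrow> u = w"
  shows "btw x w z"
proof (cases "w = x \<or> w = z")
  case True then show ?thesis by auto
next
  case False
  have "w \<in> geo x z ` {0..dist x z}" using J[OF assms(1-3)] False nb by blast
  then show ?thesis using geo_img_btw(1)[OF assms(1,3)] by blast
qed

end

context rtree begin

lemma geo_cont: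
  assumes "x \<in> T" "y \<in> T"
  shows "continuous_on {0..dist x y} (geo x y)"
    unfolding continuous_on_iff
  proof (intro ballI allI impI)
    fix s e assume "s \<in> {0..dist x y}" "(e::real) > 0"
    then show "\<exists>d>0. \<forall>t\<in>{0..dist x y}. dist t s < d \<longrightarrow> dist (geo x y t) (geo x y s) < e"
      using geo_basic(4)[OF assms(1,2)] by (intro exI[of _ e]) (auto simp: dist_real_def)
  qed

lemma tripod:
  assumes "x \<in> T" "y \<in> T" "z \<in> T"
  shows "\<exists>w\<in>T. btw x w y \<and> btw y w z \<and> btw x w z"
proof -
  define m where "m = min (dist y x) (dist y z)"
  define E where "E = {t \<in> {0..m}. dist (geo y x t) (geo y z t) = 0}"
  have m0: "0 \<le> m" unfolding m_def by simp
  have c1: "continuous_on {0..m} (geo y x)"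
    using geo_cont[OF assms(2,1)] by (rule continuous_on_subset) (auto simp: m_def)
  have c2: "continuous_on {0..m} (geo y z)"
    using geo_cont[OF assms(2,3)] by (rule continuous_on_subset) (auto simp: m_def)
  have "continuous_on {0..m} (\<lambda>t. dist (geo y x t) (geo y z t))"
    using c1 c2 by (rule continuous_on_dist)
  then have cl: "closed E" unfolding E_def
    by (rule continuous_closed_preimage_constant) simp
  have "0 \<in> E" unfolding E_def using m0 geo_basic(1)[OF assms(2,1)] geo_basic(1)[OF assms(2,3)] by simp
  then have ne: "E \<noteq> {}" by blast
  have bd: "bdd_above E" unfolding E_def by (rule bdd_aboveI[of _ m]) auto
  define t where "t = Sup E"
  have tE: "t \<in> E" unfolding t_def using closed_contains_Sup[OF ne bd cl] .
  then have t: "0 \<le> t" "t \<le> m" "geo y x t = geo y z t" unfolding E_def by auto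
  define w where "w = geo y x t"
  have tx: "t \<le> dist y x" and tz: "t \<le> dist y z" using t(2) unfolding m_def by auto
  have w1: "w \<in> T" "dist y w = t" "btw y w x" using geo_pt[OF assms(2,1) t(1) tx] unfolding w_def by auto
  have w2: "dist y w = t" "btw y w z" using geo_pt[OF assms(2,3) t(1) tz] t(3) unfolding w_def by auto
  have "btw x w z"
  proof (rule NB[OF assms(1) w1(1) assms(3)])
    fix u assume u: "btw x u w" "btw w u z" "u \<in> T"
    have a1: "btw y u x" "dist y u = dist y w + dist w u"
      using btw_comp[OF w1(3) btw_sym[OF u(1)]] by auto
    have a2: "btw y u z" "dist y u = dist y w + dist w u"
      using btw_comp[OF w2(2) u(2)] by auto
    define s where "s = dist y u"
    have s0: "0 \<le> s" unfolding s_def by simp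
    have sx: "s \<le> dist y x" using a1(1) unfolding btw_def s_def by (smt (verit) zero_le_dist)
    have sz: "s \<le> dist y z" using a2(1) unfolding btw_def s_def by (smt (verit) zero_le_dist)
    have "u = geo y x s" unfolding s_def by (rule seg_param[OF assms(2) u(3) assms(1) a1(1)])
    moreover have "u = geo y z s" unfolding s_def by (rule seg_param[OF assms(2) u(3) assms(3) a2(1)])
    ultimately have "s \<in> E" unfolding E_def m_def using s0 sx sz by auto
    then have "s \<le> t" unfolding t_def using bd by (rule cSup_upper)
    then have "dist w u \<le> 0" using a1(2) w1(2) unfolding s_def by simp
    then show "u = w" by simp
  qed
  then show ?thesis using w1 w2 btw_sym by blast
qed

lemma L1:
  assumes T: "a \<in> T" "b \<in> T" "c \<in> T" "d \<in> T"
    and h: "btw a b c" "btw b c d" "b \<noteq> c"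
  shows "btw a c d"
proof -
  obtain w where w: "w \<in> T" "btw a w c" "btw c w d" "btw a w d" using tripod[OF T(1,3,4)] by blast
  have "w = c"
  proof (rule ccontr)
    assume wc: "w \<noteq> c"
    define r where "r = min (dist c w) (dist c b)"
    have r0: "r > 0" unfolding r_def using wc h(3) by simp
    obtain u where u: "u \<in> T" "btw c u w" "dist c u = r"
      using exist[OF T(3) w(1), of r] r0 unfolding r_def by auto
    have ua: "btw c u a" using btw_nest(1)[OF btw_sym[OF w(2)] u(2)] .
    obtain u' where u': "u' \<in> T" "btw c u' b" "dist c u' = r"
      using exist[OF T(3) T(2), of r] r0 unfolding r_def by auto
    have ua': "btw c u' a" using btw_nest(1)[OF btw_sym[OF h(1)] u'(2)] .
    have "u = u'" using uniq[OF T(3) T(1) u(1) u'(1) ua ua'] u(3) u'(3) by simp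
    then have ub: "btw c u b" using u' by simp
    have ud: "btw c u d" using btw_nest(1)[OF w(3) u(2)] .
    have "btw u c d" using btw_ext(1)[OF btw_sym[OF ub] h(2)] .
    then show False using ud u(3) r0 unfolding btw_def by (smt (verit) dist_commute)
  qed
  then show ?thesis using w(4) by simp
qed

lemma segpos:
  assumes T: "a \<in> T" "b \<in> T" "z1 \<in> T" "z2 \<in> T"
    and h: "btw a z1 b" "btw a z2 b" "dist a z1 \<le> dist a z2"
  shows "btw a z1 z2" "dist z1 z2 = dist a z2 - dist a z1"
proof -
  obtain z' where z': "z' \<in> T" "btw a z' z2" "dist a z' = dist a z1"
    using exist[OF T(1) T(4), of "dist a z1"] h(3) by auto
  have "btw a z' b" using btw_nest(1)[OF h(2) z'(2)] .
  then have "z' = z1" using uniq[OF T(1,2) z'(1) T(3) _ h(1)] z'(3) by simp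
  then show "btw a z1 z2" using z'(2) by simp
  then show "dist z1 z2 = dist a z2 - dist a z1" unfolding btw_def by simp
qed

end

locale tact = rtree T for T :: "'a::metric_space set" +
  fixes G :: "('g, 'm) monoid_scheme" (structure) and \<phi> :: "'g \<Rightarrow> 'a \<Rightarrow> 'a"
  assumes iso: "isometric_action G T \<phi>"
begin

lemma grp: "group G" using iso unfolding isometric_action_def by simp
lemma ga: "group_action G T \<phi>" using iso unfolding isometric_action_def by simp

sublocale group G by (rule grp)

lemma actT: "k \<in> carrier G \<Longrightarrow> x \<in> T \<Longrightarrow> \<phi> k x \<in> T"
  using group_action.element_image[OF ga] by blast

lemma actd: "k \<in> carrier G \<Longrightarrow> x \<in> T \<Longrightarrow> y \<in> T \<Longrightarrow> dist (\<phi> k x) (\<phi> k y) = dist x y"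
  using iso unfolding isometric_action_def by blast

lemma actm: "a \<in> carrier G \<Longrightarrow> b \<in> carrier G \<Longrightarrow> x \<in> T \<Longrightarrow> \<phi> (a \<otimes> b) x = \<phi> a (\<phi> b x)"
  using group_action.composition_rule[OF ga] by blast

lemma act1: "x \<in> T \<Longrightarrow> \<phi> \<one> x = x"
  using group_action.id_eq_one[OF ga] by (metis restrict_apply')

lemma actinv: "k \<in> carrier G \<Longrightarrow> x \<in> T \<Longrightarrow> \<phi> (inv k) (\<phi> k x) = x"
  using actm[of "inv k" k x] act1 by (simp add: l_inv)

lemma actinv2: "k \<in> carrier G \<Longrightarrow> x \<in> T \<Longrightarrow> \<phi> k (\<phi> (inv k) x) = x"
  using actm[of k "inv k" x] act1 by (simp add: r_inv)

lemma btw_act: "k \<in> carrier G \<Longrightarrow> x \<in> T \<Longrightarrow> y \<in> T \<Longrightarrow> z \<in> T \<Longrightarrow> btw x z y \<Longrightarrow> btw (\<phi> k x) (\<phi> k z) (\<phi> k y)"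
  unfolding btw_def using actd by simp

lemma Tne: "T \<noteq> {}" using rt unfolding real_tree_def by simp

lemma pow_iter: "k \<in> carrier G \<Longrightarrow> x \<in> T \<Longrightarrow> \<phi> (k [^] (n::nat)) x = (\<phi> k ^^ n) x"
proof (induction n)
  case 0 then show ?case using act1 by simp
next
  case (Suc n)
  have "\<phi> (k [^] Suc n) x = \<phi> k (\<phi> (k [^] n) x)"
    using nat_pow_Suc2[of k n] actm[of k "k [^] n" x] Suc.prems by simp
  then show ?case using Suc by simp
qed

lemma iter_T: "k \<in> carrier G \<Longrightarrow> x \<in> T \<Longrightarrow> (\<phi> k ^^ n) x \<in> T"
  by (induction n) (auto simp: actT)

lemma iter_d: "k \<in> carrier G \<Longrightarrow> x \<in> T \<Longrightarrow> y \<in> T \<Longrightarrow> dist ((\<phi> k ^^ n) x) ((\<phi> k ^^ n) y) = dist x y"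
  by (induction n) (auto simp: actd iter_T)

lemma tl_bdd: "bdd_below ((\<lambda>p. dist p (\<phi> k p)) ` T)"
  by (rule bdd_belowI[of _ 0]) auto

lemma tl_le: "p \<in> T \<Longrightarrow> trans_len T \<phi> k \<le> dist p (\<phi> k p)"
  unfolding trans_len_def by (rule cInf_lower) (auto simp: tl_bdd)

lemma tl_ge: "(\<And>p. p \<in> T \<Longrightarrow> a \<le> dist p (\<phi> k p)) \<Longrightarrow> a \<le> trans_len T \<phi> k"
  unfolding trans_len_def using Tne by (intro cInf_greatest) auto

lemma tl_nonneg: "0 \<le> trans_len T \<phi> k"
  using tl_ge[of 0 k] by simp

lemma tl_eq: "p \<in> T \<Longrightarrow> dist p (\<phi> k p) = a \<Longrightarrow> (\<And>q. q \<in> T \<Longrightarrow> a \<le> dist q (\<phi> k q)) \<Longrightarrow> trans_len T \<phi> k = a"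
proof -
  assume a: "p \<in> T" "dist p (\<phi> k p) = a" "\<And>q. q \<in> T \<Longrightarrow> a \<le> dist q (\<phi> k q)"
  have "trans_len T \<phi> k \<le> a" using tl_le[OF a(1), of k] a(2) by simp
  moreover have "a \<le> trans_len T \<phi> k" using tl_ge[of a k] a(3) by blast
  ultimately show ?thesis by simp
qed

lemma ell_tl: "elliptic T \<phi> k \<Longrightarrow> trans_len T \<phi> k = 0"
proof -
  assume "elliptic T \<phi> k"
  then obtain p where p: "p \<in> T" "\<phi> k p = p" unfolding elliptic_def by blast
  show ?thesis by (rule tl_eq[OF p(1)]) (use p in simp_all)
qed

lemma ell_char: "elliptic T \<phi> k \<Longrightarrow> char_set T \<phi> k = {p\<in>T. \<phi> k p = p}"
  unfolding char_set_def using ell_tl by (auto simp: dist_commute)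

lemma iter_disp: "k \<in> carrier G \<Longrightarrow> p \<in> T \<Longrightarrow> dist p ((\<phi> k ^^ N) p) \<le> real N * dist p (\<phi> k p)"
proof (induction N)
  case 0 then show ?case by simp
next
  case (Suc N)
  have "(\<phi> k ^^ Suc N) p = (\<phi> k ^^ N) (\<phi> k p)" by (simp only: funpow_Suc_right o_def)
  then have "dist ((\<phi> k ^^ N) p) ((\<phi> k ^^ Suc N) p) = dist p (\<phi> k p)"
    using iter_d[of k p "\<phi> k p" N] Suc.prems actT by simp
  moreover have "dist p ((\<phi> k ^^ Suc N) p) \<le> dist p ((\<phi> k ^^ N) p) + dist ((\<phi> k ^^ N) p) ((\<phi> k ^^ Suc N) p)"
    by (rule dist_triangle)
  ultimately show ?case using Suc by (simp add: algebra_simps)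
qed

lemma stable:
  assumes k: "k \<in> carrier G" and p: "p \<in> T" and q: "q \<in> T"
    and h: "\<And>N::nat. real N * a \<le> dist q ((\<phi> k ^^ N) q)"
  shows "a \<le> dist p (\<phi> k p)"
proof (rule ccontr)
  assume "\<not> ?thesis"
  then have lt: "dist p (\<phi> k p) < a" by simp
  define D where "D = dist p (\<phi> k p)"
  obtain N :: nat where N: "2 * dist p q / (a - D) < real N" using reals_Archimedean2 by blast
  have pos: "a - D > 0" using lt D_def by simp
  have "dist q ((\<phi> k ^^ N) q) \<le> dist q p + dist p ((\<phi> k ^^ N) p) + dist ((\<phi> k ^^ N) p) ((\<phi> k ^^ N) q)"
    using dist_triangle[of q "(\<phi> k ^^ N) q" p] dist_triangle[of p "(\<phi> k ^^ N) q" "(\<phi> k ^^ N) p"] by linarith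
  also have "\<dots> \<le> 2 * dist p q + real N * D"
    using iter_d[OF k p q] iter_disp[OF k p, of N] by (simp add: D_def dist_commute)
  finally have "real N * a \<le> 2 * dist p q + real N * D" using h[of N] by linarith
  then have "real N * (a - D) \<le> 2 * dist p q" by (simp add: algebra_simps)
  moreover have "2 * dist p q < real N * (a - D)" using N pos by (simp add: divide_less_eq)
  ultimately show False by simp
qed

end

context tact begin

lemma pow_suc_act: "k \<in> carrier G \<Longrightarrow> x \<in> T \<Longrightarrow> \<phi> (k [^] Suc n) x = \<phi> (k [^] n) (\<phi> k x)"
  using actm[of "k [^] n" k x] by simp

lemma pow1: "k \<in> carrier G \<Longrightarrow> k [^] (1::nat) = k"
  by simp

lemma hyp_step1:
  assumes k: "k \<in> carrier G" and hyp: "hyperbolic T \<phi> k" and x: "x \<in> T"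
  shows "dist x (\<phi> k x) < dist x (\<phi> k (\<phi> k x))"
proof (rule ccontr)
  assume "\<not> ?thesis"
  then have le: "dist x (\<phi> k (\<phi> k x)) \<le> dist x (\<phi> k x)" by simp
  define x1 where "x1 = \<phi> k x"
  define x2 where "x2 = \<phi> k x1"
  define D where "D = dist x x1"
  have x1T: "x1 \<in> T" and x2T: "x2 \<in> T" unfolding x1_def x2_def using actT k x by auto
  have d12: "dist x1 x2 = D" unfolding D_def x2_def x1_def using actd[OF k x] actT[OF k x] by simp
  obtain w where w: "w \<in> T" "btw x1 w x" "btw x w x2" "btw x1 w x2" using tripod[OF x1T x x2T] by blast
  define \<delta> where "\<delta> = dist x1 w"
  have e1: "dist x1 w + dist w x = D" using w(2) unfolding btw_def D_def by (simp add: dist_commute)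
  have e2: "dist x1 w + dist w x2 = D" using w(4) d12 unfolding btw_def by simp
  have e3: "dist x w + dist w x2 = dist x x2" using w(3) unfolding btw_def by simp
  have "dist x x2 \<le> D" using le unfolding x2_def x1_def D_def by simp
  then have dle: "D \<le> 2 * \<delta>" using e1 e2 e3 unfolding \<delta>_def by (simp add: dist_commute)
  have D0: "0 \<le> D" unfolding D_def by simp
  obtain q where q: "q \<in> T" "btw x q x1" "dist x q = D / 2"
    using exist[OF x x1T, of "D/2"] D0 unfolding D_def by auto
  have kqT: "\<phi> k q \<in> T" using actT[OF k q(1)] .
  have kq: "btw x1 (\<phi> k q) x2" "dist x1 (\<phi> k q) = D / 2"
    using btw_act[OF k x x1T q(1) q(2)] actd[OF k x q(1)] q(3) unfolding x2_def x1_def by auto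
  obtain q' where q': "q' \<in> T" "btw x1 q' w" "dist x1 q' = D / 2"
    using exist[OF x1T w(1), of "D/2"] D0 dle unfolding \<delta>_def by auto
  have "btw x1 q' x" using btw_nest(1)[OF w(2) q'(2)] .
  moreover have "btw x1 q x" using btw_sym[OF q(2)] .
  moreover have "dist x1 q = D / 2" using q(2) q(3) unfolding btw_def D_def by (simp add: dist_commute)
  ultimately have "q' = q" using uniq[OF x1T x q'(1) q(1)] q'(3) by simp
  moreover have "btw x1 q' x2" using btw_nest(1)[OF w(4) q'(2)] .
  ultimately have "q = \<phi> k q" using uniq[OF x1T x2T q(1) kqT] kq q'(3) by simp
  then have "elliptic T \<phi> k" unfolding elliptic_def using q(1) by metis
  then show False using hyp unfolding hyperbolic_def by simp
qed

lemma hyp_step2: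
  assumes k: "k \<in> carrier G" and hyp: "hyperbolic T \<phi> k"
  shows "\<exists>y\<in>T. dist y (\<phi> k (\<phi> k y)) = 2 * dist y (\<phi> k y) \<and> 0 < dist y (\<phi> k y)"
proof -
  obtain x where x: "x \<in> T" using Tne by blast
  define x1 where "x1 = \<phi> k x"
  define x2 where "x2 = \<phi> k x1"
  define D where "D = dist x x1"
  have x1T: "x1 \<in> T" and x2T: "x2 \<in> T" unfolding x1_def x2_def using actT k x by auto
  have d12: "dist x1 x2 = D" unfolding D_def x2_def x1_def using actd[OF k x] actT[OF k x] by simp
  obtain w where w: "w \<in> T" "btw x1 w x" "btw x w x2" "btw x1 w x2" using tripod[OF x1T x x2T] by blast
  define \<delta> where "\<delta> = dist x1 w"
  have e1: "dist x1 w + dist w x = D" using w(2) unfolding btw_def D_def by (simp add: dist_commute)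
  have e2: "dist x1 w + dist w x2 = D" using w(4) d12 unfolding btw_def by simp
  have e3: "dist x w + dist w x2 = dist x x2" using w(3) unfolding btw_def by simp
  have "D < dist x x2" using hyp_step1[OF k hyp x] unfolding x2_def x1_def D_def by simp
  then have dlt: "2 * \<delta> < D" using e1 e2 e3 unfolding \<delta>_def by (simp add: dist_commute)
  have d0: "0 \<le> \<delta>" unfolding \<delta>_def by simp
  have dxw: "dist x w = D - \<delta>" using e1 unfolding \<delta>_def by (simp add: dist_commute)
  obtain p where p: "p \<in> T" "btw x p x1" "dist x p = \<delta>"
    using exist[OF x x1T, of \<delta>] d0 dlt unfolding D_def by auto
  have kpT: "\<phi> k p \<in> T" using actT[OF k p(1)] .
  have "btw x1 (\<phi> k p) x2" "dist x1 (\<phi> k p) = \<delta>"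
    using btw_act[OF k x x1T p(1) p(2)] actd[OF k x p(1)] p(3) unfolding x2_def x1_def by auto
  then have kpw: "\<phi> k p = w" using uniq[OF x1T x2T kpT w(1) _ w(4)] unfolding \<delta>_def by simp
  have s1: "btw x p w" "dist p w = D - 2 * \<delta>"
    using segpos[OF x x1T p(1) w(1) p(2) btw_sym[OF w(2)]] p(3) dxw dlt by auto
  have kwT: "\<phi> k w \<in> T" using actT[OF k w(1)] .
  have kw: "btw x1 (\<phi> k w) x2" "dist x1 (\<phi> k w) = D - \<delta>"
    using btw_act[OF k x x1T w(1) btw_sym[OF w(2)]] actd[OF k x w(1)] dxw unfolding x2_def x1_def by auto
  have s2: "btw x1 w (\<phi> k w)" "dist w (\<phi> k w) = D - 2 * \<delta>"
    using segpos[OF x1T x2T w(1) kwT w(4) kw(1)] kw(2) dlt unfolding \<delta>_def by auto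
  have "dist (\<phi> k w) x2 = \<delta>" using kw unfolding btw_def d12 by simp
  then have "btw w (\<phi> k w) x2" using s2(2) e2 unfolding btw_def \<delta>_def by simp
  then have "btw x w (\<phi> k w)" using btw_comp(1)[OF w(3)] by blast
  then have "btw p w (\<phi> k w)" using btw_ext(1)[OF s1(1)] by blast
  then have "dist p (\<phi> k (\<phi> k p)) = 2 * (D - 2 * \<delta>)" using s1(2) s2(2) kpw unfolding btw_def by simp
  moreover have "dist p (\<phi> k p) = D - 2 * \<delta>" using kpw s1(2) by simp
  ultimately have "dist p (\<phi> k (\<phi> k p)) = 2 * dist p (\<phi> k p) \<and> 0 < dist p (\<phi> k p)" using dlt by simp
  then show ?thesis using p(1) by blast
qed

lemma chain:
  assumes k: "k \<in> carrier G" and y: "y \<in> T" and t: "dist y (\<phi> k y) = \<tau>" "dist y (\<phi> k (\<phi> k y)) = 2 * \<tau>" "0 < \<tau>"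
  shows "dist y (\<phi> (k [^] n) y) = real n * \<tau>"
proof -
  have "dist y (\<phi> (k [^] n) y) = real n * \<tau> \<and> dist y (\<phi> (k [^] Suc n) y) = real (Suc n) * \<tau>"
  proof (induction n)
    case 0 then show ?case using t act1[OF y] act1[OF actT[OF k y]] pow_suc_act[OF k y, of 0] by simp
  next
    case (Suc n)
    have kyT: "\<phi> k y \<in> T" and kkyT: "\<phi> k (\<phi> k y) \<in> T" using actT[OF k] y by auto
    have pc: "k [^] n \<in> carrier G" using k by simp
    define a where "a = \<phi> (k [^] n) y"
    define b where "b = \<phi> (k [^] Suc n) y"
    define c where "c = \<phi> (k [^] Suc (Suc n)) y"
    have b': "b = \<phi> (k [^] n) (\<phi> k y)" unfolding b_def using pow_suc_act[OF k y] .
    have c': "c = \<phi> (k [^] n) (\<phi> k (\<phi> k y))" unfolding c_def using pow_suc_act[OF k y, of "Suc n"] pow_suc_act[OF k kyT, of n] by simp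
    have aT: "a \<in> T" and bT: "b \<in> T" and cT: "c \<in> T" unfolding a_def b' c' using actT[OF pc] y kyT kkyT by auto
    have dab: "dist a b = \<tau>" unfolding a_def b' using actd[OF pc y kyT] t(1) by simp
    have "btw y a b" using Suc.IH dab unfolding btw_def a_def b_def by (simp add: algebra_simps)
    moreover have "btw a b c"
    proof -
      have "btw y (\<phi> k y) (\<phi> k (\<phi> k y))" unfolding btw_def using t actd[OF k y kyT] by simp
      then show ?thesis unfolding a_def b' c' using btw_act[OF pc y kkyT kyT] by simp
    qed
    moreover have "a \<noteq> b" using dab t(3) by auto
    ultimately have "btw y b c" using L1[OF y aT bT cT] by simp
    moreover have "dist b c = \<tau>" unfolding b' c' using actd[OF pc kyT kkyT] actd[OF k y kyT] t(1) by simp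
    ultimately have "dist y c = real (Suc n) * \<tau> + \<tau>" using Suc.IH unfolding btw_def b_def by simp
    then show ?case using Suc.IH unfolding c_def by (simp add: algebra_simps)
  qed
  then show ?thesis by simp
qed

definition isoline :: "(real \<Rightarrow> 'a) \<Rightarrow> bool" where
  "isoline c \<longleftrightarrow> (\<forall>s. c s \<in> T) \<and> (\<forall>s t. dist (c s) (c t) = \<bar>s - t\<bar>)"

lemma line_btw: "isoline c \<Longrightarrow> r \<le> s \<Longrightarrow> s \<le> u \<Longrightarrow> btw (c r) (c s) (c u)"
  unfolding isoline_def btw_def by simp

lemma CV:
  assumes c: "isoline c" and z: "z \<in> T" and b: "btw (c a) z (c b)"
  shows "z \<in> range c"
proof -
  have main: "z \<in> range c" if ab: "a \<le> b" and b: "btw (c a) z (c b)" for a b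
  proof -
    define r where "r = dist (c a) z"
    have r: "0 \<le> r" "r \<le> b - a" using b c ab unfolding btw_def isoline_def r_def
      by (auto, smt (verit) zero_le_dist)
    have "btw (c a) (c (a + r)) (c b)" using c r unfolding isoline_def btw_def by simp
    moreover have "dist (c a) (c (a + r)) = r" using c r unfolding isoline_def by simp
    ultimately have "c (a + r) = z" using uniq[of "c a" "c b" "c (a+r)" z] c z b unfolding isoline_def r_def by simp
    then show ?thesis by (metis rangeI)
  qed
  show ?thesis
  proof (cases "a \<le> b")
    case True then show ?thesis using main b by blast
  next
    case False then show ?thesis using main[of b a] btw_sym[OF b] by simp
  qed
qed

lemma pow_line:
  assumes c: "isoline c" and k: "k \<in> carrier G" and sh: "\<And>s. \<phi> k (c s) = c (s + t)"
  shows "\<phi> (k [^] (n::nat)) (c s) = c (s + real n * t)"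
proof (induction n arbitrary: s)
  case 0 then show ?case using act1 c unfolding isoline_def by simp
next
  case (Suc n)
  have "\<phi> (k [^] Suc n) (c s) = \<phi> (k [^] n) (\<phi> k (c s))" using pow_suc_act[OF k] c unfolding isoline_def by simp
  also have "\<dots> = c (s + t + real n * t)" using sh Suc by simp
  finally show ?case by (simp add: algebra_simps)
qed

lemma AX:
  assumes c: "isoline c" and k: "k \<in> carrier G" and sh: "\<And>s. \<phi> k (c s) = c (s + t)"
    and t: "0 < t" and x: "x \<in> T" and le: "dist x (\<phi> k x) \<le> t"
  shows "x \<in> range c"
proof -
  have cT: "\<And>s. c s \<in> T" and cd: "\<And>s u. dist (c s) (c u) = \<bar>s - u\<bar>" using c unfolding isoline_def by auto
  define \<rho> where "\<rho> = dist x (c 0)"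
  define L where "L = \<rho> + 2 * t"
  have \<rho>0: "0 \<le> \<rho>" unfolding \<rho>_def by simp
  obtain w where w: "w \<in> T" "btw x w (c (-L))" "btw (c (-L)) w (c L)" "btw x w (c L)"
    using tripod[OF x cT cT] by blast
  obtain s where s: "w = c s" using CV[OF c w(1) w(3)] by blast
  have L0: "dist (c 0) (c (-L)) = L" "dist (c 0) (c L) = L" using cd \<rho>0 t unfolding L_def by auto
  have f1: "dist x (c (-L)) \<le> \<rho> + L" using dist_triangle[of x "c (-L)" "c 0"] L0 unfolding \<rho>_def by simp
  have f2: "dist x (c L) \<ge> L - \<rho>" using dist_triangle[of "c 0" "c L" x] L0 unfolding \<rho>_def by (simp add: dist_commute)
  have f3: "dist x (c L) \<le> \<rho> + L" using dist_triangle[of x "c L" "c 0"] L0 unfolding \<rho>_def by simp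
  have f4: "dist x (c (-L)) \<ge> L - \<rho>" using dist_triangle[of "c 0" "c (-L)" x] L0 unfolding \<rho>_def by (simp add: dist_commute)
  have ws: "dist (c (-L)) w = \<bar>-L - s\<bar>" "dist w (c L) = \<bar>s - L\<bar>" using cd s by auto
  have "dist (c (-L)) w - dist w (c L) = dist x (c (-L)) - dist x (c L)"
    using w(2,4) unfolding btw_def by (simp add: dist_commute)
  moreover have "dist (c (-L)) w + dist w (c L) = 2 * L" using w(3) cd[of "-L" L] unfolding btw_def L_def using \<rho>0 t by simp
  ultimately have sb: "-\<rho> \<le> s" "s \<le> \<rho>" using f1 f2 f3 f4 ws unfolding L_def using \<rho>0 t by (smt (verit))+
  have kwT: "\<phi> k w \<in> T" and kxT: "\<phi> k x \<in> T" using actT k w(1) x by auto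
  have kw: "\<phi> k w = c (s + t)" using sh s by simp
  have "btw (c s) (c (s + t)) (c L)" using line_btw[OF c] sb t unfolding L_def by simp
  then have "btw w (\<phi> k w) (c L)" using kw s by simp
  then have b1: "btw x w (\<phi> k w)" using btw_comp(1)[OF w(4)] by blast
  have "btw (\<phi> k x) (\<phi> k w) (\<phi> k (c (-L)))" using btw_act[OF k x cT w(1) w(2)] .
  moreover have "btw (c (s + t)) (c s) (c (-L + t))"
    using line_btw[OF c, of "-L + t" s "s + t"] btw_sym sb t unfolding L_def by auto
  then have "btw (\<phi> k w) w (\<phi> k (c (-L)))" using kw s sh[of "-L"] by simp
  ultimately have b2: "btw (\<phi> k x) (\<phi> k w) w" using btw_comp(1) by blast
  have ne: "w \<noteq> \<phi> k w" using kw s cd[of s "s+t"] t by auto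
  have "btw x (\<phi> k w) (\<phi> k x)" using L1[OF x w(1) kwT kxT b1 btw_sym[OF b2] ne] .
  then have "dist x (\<phi> k x) = dist x w + t + dist w x"
    using b1 actd[OF k w(1) x] kw s cd[of s "s+t"] t unfolding btw_def by (simp add: dist_commute)
  then have "dist x w = 0" using le by (smt (verit) zero_le_dist dist_commute)
  then show ?thesis using s by simp
qed

end

locale haxis = tact +
  fixes k :: 'b and y :: 'a and \<tau> :: real
  assumes kc: "k \<in> carrier G" and yT: "y \<in> T" and tpos: "0 < \<tau>"
    and d1: "dist y (\<phi> k y) = \<tau>" and d2: "dist y (\<phi> k (\<phi> k y)) = 2 * \<tau>"
begin

definition yk :: "int \<Rightarrow> 'a" where "yk i = \<phi> (k [^] i) y"

lemma yk_T: "yk i \<in> T" unfolding yk_def using actT kc yT by simp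

lemma ykD_aux: assumes "0 \<le> m" shows "dist (yk i) (yk (i + m)) = of_int m * \<tau>"
proof -
  have ic: "k [^] i \<in> carrier G" "k [^] m \<in> carrier G" using kc by auto
  have "k [^] (i + m) = k [^] i \<otimes> k [^] m" using int_pow_mult[OF kc] by simp
  then have "yk (i + m) = \<phi> (k [^] i) (\<phi> (k [^] m) y)" unfolding yk_def using actm[OF ic yT] by simp
  then have "dist (yk i) (yk (i + m)) = dist y (\<phi> (k [^] m) y)"
    unfolding yk_def using actd[OF ic(1) yT actT[OF ic(2) yT]] by simp
  also have "k [^] m = k [^] (nat m)"
  proof -
    obtain n where "m = int n" using assms nonneg_eq_int by blast
    then show ?thesis by (simp add: int_pow_int)
  qed
  also have "dist y (\<phi> (k [^] (nat m)) y) = real (nat m) * \<tau>" using chain[OF kc yT d1 d2 tpos] .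
  finally show ?thesis using assms by simp
qed

lemma ykD: "dist (yk i) (yk j) = \<bar>of_int i - of_int j\<bar> * \<tau>"
proof (cases "i \<le> j")
  case True
  then show ?thesis using ykD_aux[of "j - i" i] by simp
next
  case False
  then show ?thesis using ykD_aux[of "i - j" j] by (simp add: dist_commute)
qed

lemma ykD': "i \<le> j \<Longrightarrow> dist (yk i) (yk j) = (of_int j - of_int i) * \<tau>"
  using ykD[of i j] by simp

lemma yk_shift: "\<phi> k (yk i) = yk (i + 1)"
proof -
  have "k [^] (1 + i) = k [^] (1::int) \<otimes> k [^] i" using int_pow_mult[OF kc] by simp
  then have "k [^] (i + 1) = k \<otimes> k [^] i" using kc by (simp add: add.commute)
  then show ?thesis unfolding yk_def using actm[of k "k [^] i" y] kc yT by simp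
qed

definition Pl :: "'a \<Rightarrow> real \<Rightarrow> nat \<Rightarrow> bool" where
  "Pl z s M \<longleftrightarrow> z \<in> T \<and> dist (yk (- int M)) z = s + real M * \<tau> \<and> dist z (yk (int M)) = real M * \<tau> - s"

lemma Pl_btw: "Pl z s M \<Longrightarrow> btw (yk (- int M)) z (yk (int M))"
  unfolding Pl_def btw_def using ykD[of "- int M" "int M"] tpos by simp

lemma Pl_up:
  assumes P: "Pl z s M" and MK: "M \<le> K"
  shows "Pl z s K"
proof -
  have b1: "btw (yk (- int K)) (yk (- int M)) (yk (int M))"
    unfolding btw_def using ykD MK tpos by (simp add: algebra_simps abs_if)
  have b2: "btw (yk (int K)) (yk (int M)) (yk (- int M))"
    unfolding btw_def using ykD MK tpos by (simp add: algebra_simps abs_if)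
  have bz: "btw (yk (- int M)) z (yk (int M))" using Pl_btw[OF P] .
  have "dist (yk (- int K)) z = dist (yk (- int K)) (yk (- int M)) + dist (yk (- int M)) z"
    using btw_comp(3)[OF b1 bz] .
  moreover have "dist (yk (int K)) z = dist (yk (int K)) (yk (int M)) + dist (yk (int M)) z"
    using btw_comp(3)[OF b2 btw_sym[OF bz]] .
  ultimately show ?thesis using P MK ykD tpos unfolding Pl_def
    by (simp add: algebra_simps abs_if dist_commute)
qed

lemma Pl_uniq: assumes "Pl z1 s M" "Pl z2 s M" shows "z1 = z2"
proof -
  have "z1 \<in> T" "z2 \<in> T" "dist (yk (- int M)) z1 = dist (yk (- int M)) z2" using assms unfolding Pl_def by auto
  then show ?thesis using uniq[OF yk_T yk_T _ _ Pl_btw[OF assms(1)] Pl_btw[OF assms(2)]] by simp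
qed

lemma Pl_ex: assumes "\<bar>s\<bar> \<le> real M * \<tau>" shows "\<exists>z. Pl z s M"
proof -
  have dd: "dist (yk (- int M)) (yk (int M)) = 2 * real M * \<tau>" using ykD tpos by simp
  have "0 \<le> s + real M * \<tau>" "s + real M * \<tau> \<le> dist (yk (- int M)) (yk (int M))"
    using assms dd by (auto simp: abs_le_iff mult.commute)
  then obtain z where z: "z \<in> T" "btw (yk (- int M)) z (yk (int M))" "dist (yk (- int M)) z = s + real M * \<tau>"
    using exist[OF yk_T yk_T, of "s + real M * \<tau>" "- int M" "int M"] by blast
  then have "Pl z s M" unfolding Pl_def btw_def using dd by (simp add: mult.commute)
  then show ?thesis by blast
qed

definition Mof :: "real \<Rightarrow> nat" where "Mof s = nat \<lceil>\<bar>s\<bar> / \<tau>\<rceil>"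

lemma Mof: "\<bar>s\<bar> \<le> real (Mof s) * \<tau>"
proof -
  have "\<bar>s\<bar> / \<tau> \<le> real (Mof s)" unfolding Mof_def by linarith
  then show ?thesis using tpos by (simp add: divide_le_eq)
qed

definition cl :: "real \<Rightarrow> 'a" where "cl s = (SOME z. Pl z s (Mof s))"

lemma cl_P: assumes "\<bar>s\<bar> \<le> real M * \<tau>" shows "Pl (cl s) s M"
proof -
  have P0: "Pl (cl s) s (Mof s)" unfolding cl_def using Pl_ex[OF Mof] by (rule someI_ex)
  obtain z where z: "Pl z s M" using Pl_ex[OF assms] by blast
  have "Pl (cl s) s (max M (Mof s))" using Pl_up[OF P0] by simp
  moreover have "Pl z s (max M (Mof s))" using Pl_up[OF z] by simp
  ultimately have "z = cl s" using Pl_uniq by blast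
  then show ?thesis using z by simp
qed

lemma cl_T: "cl s \<in> T" using cl_P[OF Mof] unfolding Pl_def by simp

lemma cl_d: "dist (cl s) (cl t) = \<bar>s - t\<bar>"
proof -
  have main: "dist (cl s) (cl t) = t - s" if st: "s \<le> t" for s t
  proof -
    define M where "M = max (Mof s) (Mof t)"
    have "\<bar>s\<bar> \<le> real M * \<tau>" using Mof[of s] tpos unfolding M_def
      by (smt (verit) mult_right_mono of_nat_le_iff max.cobounded1)
    then have Ps: "Pl (cl s) s M" by (rule cl_P)
    have "\<bar>t\<bar> \<le> real M * \<tau>" using Mof[of t] tpos unfolding M_def
      by (smt (verit) mult_right_mono of_nat_le_iff max.cobounded2)
    then have Pt: "Pl (cl t) t M" by (rule cl_P)
    have "dist (cl s) (cl t) = dist (yk (- int M)) (cl t) - dist (yk (- int M)) (cl s)"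
      using segpos(2)[OF yk_T yk_T cl_T cl_T Pl_btw[OF Ps] Pl_btw[OF Pt]] Ps Pt st unfolding Pl_def by simp
    then show ?thesis using Ps Pt unfolding Pl_def by simp
  qed
  show ?thesis
  proof (cases "s \<le> t")
    case True then show ?thesis using main by simp
  next
    case False then show ?thesis using main[of t s] by (simp add: dist_commute)
  qed
qed

lemma cl_shift: "\<phi> k (cl s) = cl (s + \<tau>)"
proof -
  define M where "M = Mof s"
  have Ms: "\<bar>s\<bar> \<le> real M * \<tau>" unfolding M_def by (rule Mof)
  have P: "Pl (cl s) s M" using cl_P[OF Ms] .
  have kT: "\<phi> k (cl s) \<in> T" using actT[OF kc cl_T] .
  have y1: "\<phi> k (yk (- int M)) = yk (- int M + 1)" using yk_shift by simp
  have y2: "\<phi> k (yk (int M)) = yk (int (Suc M))" using yk_shift[of "int M"] by (simp add: add.commute)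
  have e1: "dist (yk (- int M + 1)) (\<phi> k (cl s)) = s + real M * \<tau>"
    using actd[OF kc yk_T cl_T, of "- int M" s] y1 P unfolding Pl_def by simp
  have e2: "dist (\<phi> k (cl s)) (yk (int (Suc M))) = real M * \<tau> - s"
    using actd[OF kc cl_T yk_T, of s "int M"] y2 P unfolding Pl_def by simp
  have D1: "dist (yk (- int M + 1)) (yk (int (Suc M))) = 2 * real M * \<tau>"
    using ykD'[of "- int M + 1" "int (Suc M)"] by (simp add: algebra_simps)
  have D2: "dist (yk (- int (Suc M))) (yk (- int M + 1)) = 2 * \<tau>"
    using ykD'[of "- int (Suc M)" "- int M + 1"] by (simp add: algebra_simps)
  have D3: "dist (yk (- int (Suc M))) (yk (int (Suc M))) = 2 * real M * \<tau> + 2 * \<tau>"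
    using ykD'[of "- int (Suc M)" "int (Suc M)"] by (simp add: algebra_simps)
  have b1: "btw (yk (- int (Suc M))) (yk (- int M + 1)) (yk (int (Suc M)))"
    unfolding btw_def using D1 D2 D3 by simp
  have b2: "btw (yk (- int M + 1)) (\<phi> k (cl s)) (yk (int (Suc M)))"
    unfolding btw_def using e1 e2 D1 by simp
  have "dist (yk (- int (Suc M))) (\<phi> k (cl s)) = 2 * \<tau> + (s + real M * \<tau>)"
    using btw_comp(3)[OF b1 b2] e1 D2 by simp
  then have "Pl (\<phi> k (cl s)) (s + \<tau>) (Suc M)" unfolding Pl_def using kT e2
    by (simp add: algebra_simps)
  moreover have "\<bar>s + \<tau>\<bar> \<le> real (Suc M) * \<tau>" using Ms tpos by (simp add: algebra_simps abs_le_iff)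
  then have "Pl (cl (s + \<tau>)) (s + \<tau>) (Suc M)" by (rule cl_P)
  ultimately show ?thesis using Pl_uniq by blast
qed

lemma cl_line: "isoline cl" unfolding isoline_def using cl_T cl_d by simp

end

context tact begin

lemma hyp_pack:
  assumes k: "k \<in> carrier G" and hyp: "hyperbolic T \<phi> k"
  shows "\<exists>c \<tau>. isoline c \<and> 0 < \<tau> \<and> (\<forall>s. \<phi> k (c s) = c (s + \<tau>)) \<and>
     (\<forall>m::nat. 0 < m \<longrightarrow> trans_len T \<phi> (k [^] m) = real m * \<tau> \<and>
          char_set T \<phi> (k [^] m) = range c \<and> hyperbolic T \<phi> (k [^] m))"
proof -
  obtain y where y: "y \<in> T" "dist y (\<phi> k (\<phi> k y)) = 2 * dist y (\<phi> k y)" "0 < dist y (\<phi> k y)"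
    using hyp_step2[OF k hyp] by blast
  define \<tau> where "\<tau> = dist y (\<phi> k y)"
  interpret H: haxis T G \<phi> k y \<tau>
    by unfold_locales (use k y in \<open>simp_all add: \<tau>_def\<close>)
  define c where "c = H.cl"
  have c: "isoline c" unfolding c_def by (rule H.cl_line)
  have sh: "\<And>s. \<phi> k (c s) = c (s + \<tau>)" unfolding c_def by (rule H.cl_shift)
  have cT: "\<And>s. c s \<in> T" using c unfolding isoline_def by simp
  have cd: "\<And>s t. dist (c s) (c t) = \<bar>s - t\<bar>" using c unfolding isoline_def by simp
  have t0: "0 < \<tau>" using y(3) unfolding \<tau>_def .
  have more: "trans_len T \<phi> (k [^] m) = real m * \<tau> \<and> char_set T \<phi> (k [^] m) = range c \<and> hyperbolic T \<phi> (k [^] m)"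
    if m: "0 < m" for m :: nat
  proof -
    have km: "k [^] m \<in> carrier G" using k by simp
    have shm: "\<And>s. \<phi> (k [^] m) (c s) = c (s + real m * \<tau>)" using pow_line[OF c k sh] .
    have mt: "0 < real m * \<tau>" using m t0 by simp
    have lb: "real m * \<tau> \<le> dist p (\<phi> (k [^] m) p)" if p: "p \<in> T" for p
    proof (rule stable[OF km p cT[of 0]])
      fix N :: nat
      have "(\<phi> (k [^] m) ^^ N) (c 0) = \<phi> ((k [^] m) [^] N) (c 0)" using pow_iter[OF km cT] by simp
      also have "\<dots> = c (real N * (real m * \<tau>))" using pow_line[OF c km shm, of N 0] by simp
      finally show "real N * (real m * \<tau>) \<le> dist (c 0) ((\<phi> (k [^] m) ^^ N) (c 0))" using cd by simp
    qed
    have tl: "trans_len T \<phi> (k [^] m) = real m * \<tau>"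
      by (rule tl_eq[OF cT[of 0]]) (use shm cd lb mt in simp_all)
    have cs: "char_set T \<phi> (k [^] m) = range c"
    proof
      show "char_set T \<phi> (k [^] m) \<subseteq> range c"
        unfolding char_set_def tl using AX[OF c km shm mt] by auto
      show "range c \<subseteq> char_set T \<phi> (k [^] m)"
        unfolding char_set_def tl using cT shm cd mt by auto
    qed
    have "hyperbolic T \<phi> (k [^] m)" unfolding hyperbolic_def elliptic_def
      using lb mt by force
    then show ?thesis using tl cs by simp
  qed
  show ?thesis using c t0 sh more by blast
qed

end

lemma tlen_gt:
  assumes "tree_length S > ereal r" "0 \<le> r"
  shows "\<exists>x\<in>S. \<exists>y\<in>S. r < dist x y"
proof -
  have ne: "S \<noteq> {}" using assms unfolding tree_length_def by (auto split: if_splits)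
  then have "ereal r < (SUP x\<in>S. SUP y\<in>S. ereal (dist x y))" using assms(1) unfolding tree_length_def by simp
  then show ?thesis by (simp add: less_SUP_iff)
qed

lemma tlen_ge:
  assumes "x \<in> S" "y \<in> S"
  shows "ereal (dist x y) \<le> tree_length S"
proof -
  have "S \<noteq> {}" using assms by auto
  moreover have "ereal (dist x y) \<le> (SUP x\<in>S. SUP y\<in>S. ereal (dist x y))"
  proof -
    have a: "ereal (dist x y) \<le> (SUP y\<in>S. ereal (dist x y))" using assms(2) by (rule SUP_upper)
    have b: "(SUP y\<in>S. ereal (dist x y)) \<le> (SUP x\<in>S. SUP y\<in>S. ereal (dist x y))" using assms(1) by (rule SUP_upper)
    show ?thesis using a b by (rule order_trans)
  qed
  ultimately show ?thesis unfolding tree_length_def by simp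
qed

lemma tlen_empty: "tree_length {} = 0" unfolding tree_length_def by simp

lemma real_iso:
  fixes f :: "real \<Rightarrow> real"
  assumes "\<And>s t. \<bar>f s - f t\<bar> = \<bar>s - t\<bar>"
  shows "(\<forall>s. f s = f 0 + s) \<or> (\<forall>s. f s = f 0 - s)"
proof -
  have C: "\<bar>f 1 - f 0\<bar> = 1" using assms[of 1 0] by simp
  have key: "f s - f 0 = (f 1 - f 0) * s" for s
  proof -
    have a: "\<bar>f s - f 0\<bar> = \<bar>s\<bar>" "\<bar>f s - f 1\<bar> = \<bar>s - 1\<bar>" using assms[of s 0] assms[of s 1] by auto
    have a2: "(f s - f 0)^2 = s^2" using a(1) by (metis power2_abs)
    have b2: "(f s - f 1)^2 = (s - 1)^2" using a(2) by (metis power2_abs)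
    have c2: "(f 1 - f 0)^2 = 1" using C by (metis power2_abs one_power2)
    have "(f s - f 1)^2 = (f s - f 0)^2 - 2 * (f s - f 0) * (f 1 - f 0) + (f 1 - f 0)^2"
      by (simp add: power2_eq_square algebra_simps)
    then have "2 * (f s - f 0) * (f 1 - f 0) = 2 * s" using a2 b2 c2 by (simp add: power2_eq_square algebra_simps)
    then have xe: "(f s - f 0) * (f 1 - f 0) = s" by (simp only: mult.assoc)
    have ee: "(f 1 - f 0) * (f 1 - f 0) = 1" using c2 by (simp add: power2_eq_square)
    have "(f 1 - f 0) * s = (f 1 - f 0) * ((f s - f 0) * (f 1 - f 0))" using xe by simp
    also have "\<dots> = (f s - f 0) * ((f 1 - f 0) * (f 1 - f 0))" by (simp only: mult.assoc mult.commute mult.left_commute)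
    finally show ?thesis using ee by simp
  qed
  have "f 1 - f 0 = 1 \<or> f 1 - f 0 = -1" using C by linarith
  then show ?thesis
  proof
    assume e: "f 1 - f 0 = 1"
    have "f s = f 0 + s" for s using key[of s] unfolding e by simp
    then show ?thesis by blast
  next
    assume e: "f 1 - f 0 = -1"
    have "f s = f 0 - s" for s using key[of s] unfolding e by simp
    then show ?thesis by blast
  qed
qed

context tact begin

lemma gen_sub:
  assumes g: "g \<in> carrier G" and h: "h \<in> carrier G"
    and K1: "\<one> \<in> K" and Kg: "g \<in> K" "h \<in> K" "inv g \<in> K" "inv h \<in> K"
    and Km: "\<And>a b. a \<in> K \<Longrightarrow> b \<in> K \<Longrightarrow> a \<otimes> b \<in> K"
  shows "generate G {g, h} \<subseteq> K"
proof
  fix x assume "x \<in> generate G {g, h}"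
  then show "x \<in> K"
  proof (induction rule: generate.induct)
    case one then show ?case using K1 by simp
  next
    case (incl h') then show ?case using Kg by blast
  next
    case (inv h') then show ?case using Kg by blast
  next
    case (eng h1 h2) then show ?case using Km by blast
  qed
qed

definition trl :: "(real \<Rightarrow> 'a) \<Rightarrow> 'g \<Rightarrow> real \<Rightarrow> bool" where
  "trl c k b \<longleftrightarrow> k \<in> carrier G \<and> (\<forall>s. \<phi> k (c s) = c (s + b))"

lemma trl_one: "isoline c \<Longrightarrow> trl c \<one> 0"
  unfolding trl_def isoline_def using act1 by simp

lemma trl_mult: "isoline c \<Longrightarrow> trl c k1 b1 \<Longrightarrow> trl c k2 b2 \<Longrightarrow> trl c (k1 \<otimes> k2) (b1 + b2)"
  unfolding trl_def isoline_def using actm by (simp add: algebra_simps)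

lemma trl_inv: assumes "isoline c" "trl c k b" shows "trl c (inv k) (- b)"
proof -
  have "\<phi> (inv k) (c s) = c (s - b)" for s
  proof -
    have "\<phi> k (c (s - b)) = c s" using assms unfolding trl_def by simp
    then show ?thesis using actinv[of k "c (s - b)"] assms unfolding trl_def isoline_def by simp
  qed
  then show ?thesis using assms unfolding trl_def by simp
qed

lemma trl_pow: "isoline c \<Longrightarrow> trl c k b \<Longrightarrow> trl c (k [^] (n::nat)) (real n * b)"
  unfolding trl_def using pow_line by simp

lemma trl_tl: assumes c: "isoline c" and t: "trl c k b" shows "trans_len T \<phi> k = \<bar>b\<bar>"
proof -
  have k: "k \<in> carrier G" and sh: "\<And>s. \<phi> k (c s) = c (s + b)" using t unfolding trl_def by auto
  have cT: "\<And>s. c s \<in> T" and cd: "\<And>s u. dist (c s) (c u) = \<bar>s - u\<bar>" using c unfolding isoline_def by auto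
  have it: "(\<phi> k ^^ N) (c 0) = c (real N * b)" for N
    using pow_iter[OF k cT] pow_line[OF c k sh, of N 0] by simp
  show ?thesis
  proof (rule tl_eq[OF cT[of 0]])
    show "dist (c 0) (\<phi> k (c 0)) = \<bar>b\<bar>" using sh cd by simp
    fix q assume q: "q \<in> T"
    show "\<bar>b\<bar> \<le> dist q (\<phi> k q)"
      by (rule stable[OF k q cT[of 0]]) (use it cd in \<open>simp add: abs_mult\<close>)
  qed
qed

lemma abel_line:
  assumes c: "isoline c" and g: "trl c g bg" and h: "trl c h bh"
  shows "abelian_on G T \<phi> (generate G {g, h})"
proof -
  define K where "K = {k. \<exists>b. trl c k b}"
  have gc: "g \<in> carrier G" and hc: "h \<in> carrier G" using g h unfolding trl_def by auto
  have "generate G {g, h} \<subseteq> K"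
  proof (rule gen_sub[OF gc hc])
    show "\<one> \<in> K" unfolding K_def using trl_one[OF c] by blast
    show "g \<in> K" "h \<in> K" unfolding K_def using g h by blast+
    show "inv g \<in> K" "inv h \<in> K" unfolding K_def using trl_inv[OF c] g h by blast+
    show "a \<otimes> b \<in> K" if "a \<in> K" "b \<in> K" for a b
      using that trl_mult[OF c] unfolding K_def by blast
  qed
  moreover have "trans_len T \<phi> (a \<otimes> b) \<le> trans_len T \<phi> a + trans_len T \<phi> b" if ab: "a \<in> K" "b \<in> K" for a b
  proof -
    obtain ba bb where t: "trl c a ba" "trl c b bb" using ab unfolding K_def by blast
    have "trl c (a \<otimes> b) (ba + bb)" using trl_mult[OF c t] .
    then have "trans_len T \<phi> (a \<otimes> b) = \<bar>ba + bb\<bar>" using trl_tl[OF c] by blast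
    moreover have "trans_len T \<phi> a = \<bar>ba\<bar>" "trans_len T \<phi> b = \<bar>bb\<bar>" using trl_tl[OF c] t by blast+
    ultimately show ?thesis by (simp add: abs_triangle_ineq)
  qed
  ultimately show ?thesis unfolding abelian_on_def by blast
qed

lemma abel_fix:
  assumes g: "g \<in> carrier G" and h: "h \<in> carrier G" and z: "z \<in> T" "\<phi> g z = z" "\<phi> h z = z"
  shows "abelian_on G T \<phi> (generate G {g, h})"
proof -
  define K where "K = {k \<in> carrier G. \<phi> k z = z}"
  have "generate G {g, h} \<subseteq> K"
  proof (rule gen_sub[OF g h])
    show "\<one> \<in> K" unfolding K_def using act1 z by simp
    show "g \<in> K" "h \<in> K" unfolding K_def using g h z by auto
    show "inv g \<in> K" unfolding K_def using g z actinv[OF g z(1)] by simp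
    show "inv h \<in> K" unfolding K_def using h z actinv[OF h z(1)] by simp
    show "a \<otimes> b \<in> K" if "a \<in> K" "b \<in> K" for a b
      using that actm z unfolding K_def by auto
  qed
  moreover have "trans_len T \<phi> a = 0" if "a \<in> K" for a
    using that z(1) unfolding K_def by (intro tl_eq[of z]) auto
  moreover have "\<And>a b. a \<in> K \<Longrightarrow> b \<in> K \<Longrightarrow> a \<otimes> b \<in> K"
    unfolding K_def using actm z by auto
  ultimately show ?thesis unfolding abelian_on_def using tl_nonneg
    by (simp add: subset_iff)
qed

lemma line_iso:
  assumes c: "isoline c" and k: "k \<in> carrier G" and st: "\<phi> k ` range c = range c"
  shows "\<exists>b. (\<forall>s. \<phi> k (c s) = c (s + b)) \<or> (\<forall>s. \<phi> k (c s) = c (b - s))"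
proof -
  have cT: "\<And>s. c s \<in> T" and cd: "\<And>s u. dist (c s) (c u) = \<bar>s - u\<bar>" using c unfolding isoline_def by auto
  have ex: "\<exists>t. \<phi> k (c s) = c t" for s
  proof -
    have "\<phi> k (c s) \<in> \<phi> k ` range c" by simp
    then have "\<phi> k (c s) \<in> range c" using st by simp
    then show ?thesis by (auto simp: eq_commute)
  qed
  define u where "u s = (SOME t. \<phi> k (c s) = c t)" for s
  have u: "\<phi> k (c s) = c (u s)" for s unfolding u_def using someI_ex[OF ex[of s]] .
  have "\<bar>u s - u t\<bar> = \<bar>s - t\<bar>" for s t
    using actd[OF k cT cT, of s t] u cd by simp
  then have "(\<forall>s. u s = u 0 + s) \<or> (\<forall>s. u s = u 0 - s)" by (rule real_iso)
  then show ?thesis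
  proof
    assume a: "\<forall>s. u s = u 0 + s"
    have "\<phi> k (c s) = c (s + u 0)" for s using u[of s] a[rule_format, of s] by (simp add: add.commute)
    then have "\<forall>s. \<phi> k (c s) = c (s + u 0)" by blast
    then show ?thesis by blast
  next
    assume a: "\<forall>s. u s = u 0 - s"
    have "\<phi> k (c s) = c (u 0 - s)" for s using u[of s] a[rule_format, of s] by simp
    then have "\<forall>s. \<phi> k (c s) = c (u 0 - s)" by blast
    then show ?thesis by blast
  qed
qed

lemma ws_pow:
  assumes g0: "g0 \<in> carrier G" and ws: "weakly_stable G T \<phi> lam g0" and lam: "0 < lam"
    and m: "10 * max lam 1 \<le> real m"
  shows "weakly_stable G T \<phi> (1/3) (g0 [^] (m::nat))"
proof -
  have hyp: "hyperbolic T \<phi> g0" using ws unfolding weakly_stable_def by simp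
  obtain c \<tau> where P: "isoline c" "0 < \<tau>" "\<forall>s. \<phi> g0 (c s) = c (s + \<tau>)"
    "\<forall>m::nat. 0 < m \<longrightarrow> trans_len T \<phi> (g0 [^] m) = real m * \<tau> \<and>
          char_set T \<phi> (g0 [^] m) = range c \<and> hyperbolic T \<phi> (g0 [^] m)"
    using hyp_pack[OF g0 hyp] by blast
  have "1 \<le> max lam 1" by simp
  then have "10 \<le> real m" using m by linarith
  then have m0: "0 < m" by simp
  have A1: "char_set T \<phi> g0 = range c" "trans_len T \<phi> g0 = \<tau>" using P(4)[rule_format, of 1] g0 by simp_all
  have Am: "char_set T \<phi> (g0 [^] m) = range c" "trans_len T \<phi> (g0 [^] m) = real m * \<tau>"
    "hyperbolic T \<phi> (g0 [^] m)" using P(4) m0 by auto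
  have le: "lam * \<tau> \<le> 1/3 * (real m * \<tau>)"
  proof -
    have "lam \<le> max lam 1" by simp
    then have "3 * lam \<le> real m" using m lam by linarith
    then show ?thesis using P(2) by (simp add: mult_right_mono algebra_simps)
  qed
  show ?thesis unfolding weakly_stable_def
  proof (intro conjI ballI impI)
    show "hyperbolic T \<phi> (g0 [^] m)" using Am(3) .
    fix k assume k: "k \<in> carrier G"
      and gt: "ereal (1 / 3 * trans_len T \<phi> (g0 [^] m)) < tree_length (char_set T \<phi> (g0 [^] m) \<inter> \<phi> k ` char_set T \<phi> (g0 [^] m))"
    have "ereal (lam * trans_len T \<phi> g0) < tree_length (char_set T \<phi> g0 \<inter> \<phi> k ` char_set T \<phi> g0)"
      using gt le unfolding Am A1 by (meson ereal_less_eq(3) order_le_less_trans)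
    then have "k \<in> stab_axis G T \<phi> g0" using ws k unfolding weakly_stable_def by blast
    then show "k \<in> stab_axis G T \<phi> (g0 [^] m)" unfolding stab_axis_def Am A1 by simp
  qed
qed

end

context tact begin

lemma iso_inj: assumes "isoline c" "c s = c t" shows "s = t"
proof -
  have "dist (c s) (c t) = \<bar>s - t\<bar>" using assms(1) unfolding isoline_def by blast
  then have "\<bar>s - t\<bar> = 0" using assms(2) by simp
  then show ?thesis by simp
qed

lemma EE:
  assumes g: "g \<in> carrier G" and h: "h \<in> carrier G" and ge: "elliptic T \<phi> g" and he: "elliptic T \<phi> h"
    and irr: "irreducible_on G T \<phi> (generate G {g, h})"
  shows "tree_length (char_set T \<phi> g \<inter> char_set T \<phi> h) \<le> ereal (max (trans_len T \<phi> g) (trans_len T \<phi> h) / 2)"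
proof -
  have "char_set T \<phi> g \<inter> char_set T \<phi> h = {}"
  proof (rule ccontr)
    assume "char_set T \<phi> g \<inter> char_set T \<phi> h \<noteq> {}"
    then obtain z where "z \<in> T" "\<phi> g z = z" "\<phi> h z = z" unfolding ell_char[OF ge] ell_char[OF he] by blast
    then have "abelian_on G T \<phi> (generate G {g, h})" using abel_fix[OF g h] by blast
    then show False using irr unfolding irreducible_on_def by simp
  qed
  then show ?thesis using ell_tl[OF ge] ell_tl[OF he] by (simp add: tlen_empty)
qed

lemma EH:
  assumes g: "g \<in> carrier G" and ge: "elliptic T \<phi> g" and h0: "h0 \<in> carrier G"
    and ws: "weakly_stable G T \<phi> lam h0" and lam: "0 < lam" and n: "10 * max lam 1 \<le> real n"
    and irr: "irreducible_on G T \<phi> (generate G {g, h0 [^] n})"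
  shows "tree_length (char_set T \<phi> g \<inter> char_set T \<phi> (h0 [^] n))
     \<le> ereal (max (trans_len T \<phi> g) (trans_len T \<phi> (h0 [^] n)) / 2)"
proof (rule ccontr)
  assume neg: "\<not> ?thesis"
  have hyp: "hyperbolic T \<phi> h0" using ws unfolding weakly_stable_def by simp
  obtain c \<tau> where P: "isoline c" "0 < \<tau>" "\<forall>s. \<phi> h0 (c s) = c (s + \<tau>)"
    "\<forall>m::nat. 0 < m \<longrightarrow> trans_len T \<phi> (h0 [^] m) = real m * \<tau> \<and>
          char_set T \<phi> (h0 [^] m) = range c \<and> hyperbolic T \<phi> (h0 [^] m)"
    using hyp_pack[OF h0 hyp] by blast
  have cT: "\<And>s. c s \<in> T" and cd: "\<And>s u. dist (c s) (c u) = \<bar>s - u\<bar>" using P(1) unfolding isoline_def by auto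
  have "1 \<le> max lam 1" "lam \<le> max lam 1" by simp_all
  then have n10: "10 \<le> real n" "10 * lam \<le> real n" using n by linarith+
  then have n0: "0 < n" by simp
  have A1: "char_set T \<phi> h0 = range c" "trans_len T \<phi> h0 = \<tau>" using P(4)[rule_format, of 1] h0 by simp_all
  have An: "char_set T \<phi> (h0 [^] n) = range c" "trans_len T \<phi> (h0 [^] n) = real n * \<tau>"
    using P(4) n0 by auto
  have tg: "trans_len T \<phi> g = 0" using ell_tl[OF ge] .
  have mx: "max (trans_len T \<phi> g) (trans_len T \<phi> (h0 [^] n)) = real n * \<tau>"
    using tg An P(2) by simp
  have "ereal (real n * \<tau> / 2) < tree_length (char_set T \<phi> g \<inter> range c)"
    using neg unfolding mx unfolding An by (simp add: not_le)
  then have "\<exists>x\<in>char_set T \<phi> g \<inter> range c. \<exists>y\<in>char_set T \<phi> g \<inter> range c. real n * \<tau> / 2 < dist x y"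
    by (rule tlen_gt) (use P(2) in simp)
  then obtain p q where pq: "p \<in> char_set T \<phi> g \<inter> range c" "q \<in> char_set T \<phi> g \<inter> range c" "real n * \<tau> / 2 < dist p q"
    by blast
  have fx: "p \<in> T" "\<phi> g p = p" "q \<in> T" "\<phi> g q = q" using pq unfolding ell_char[OF ge] by auto
  obtain a a' where aa: "p = c a" "q = c a'" using pq by blast
  have "\<phi> g p \<in> \<phi> g ` range c" "\<phi> g q \<in> \<phi> g ` range c" using pq by blast+
  then have "p \<in> \<phi> g ` range c" "q \<in> \<phi> g ` range c" using fx by simp_all
  then have mem: "p \<in> char_set T \<phi> h0 \<inter> \<phi> g ` char_set T \<phi> h0" "q \<in> char_set T \<phi> h0 \<inter> \<phi> g ` char_set T \<phi> h0"
    unfolding A1 using pq by blast+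
  have "ereal (dist p q) \<le> tree_length (char_set T \<phi> h0 \<inter> \<phi> g ` char_set T \<phi> h0)" using tlen_ge[OF mem] .
  moreover have "lam * \<tau> < dist p q"
  proof -
    have "lam * \<tau> < 5 * lam * \<tau>" using lam P(2) by simp
    also have "5 * lam * \<tau> \<le> real n * \<tau> / 2" using n10 P(2) by (simp add: mult_right_mono)
    finally show ?thesis using pq(3) by simp
  qed
  ultimately have "ereal (lam * trans_len T \<phi> h0) < tree_length (char_set T \<phi> h0 \<inter> \<phi> g ` char_set T \<phi> h0)"
    unfolding A1 by (meson ereal_less_eq(3) less_ereal.simps(1) order_less_le_trans)
  then have "g \<in> stab_axis G T \<phi> h0" using ws g unfolding weakly_stable_def by blast
  then have st: "\<phi> g ` range c = range c" unfolding stab_axis_def A1 by simp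
  have "0 < real n * \<tau>" using n0 P(2) by simp
  then have pq0: "p \<noteq> q" using pq(3) by auto
  then have aa0: "a \<noteq> a'" using aa by auto
  obtain b where b: "(\<forall>s. \<phi> g (c s) = c (s + b)) \<or> (\<forall>s. \<phi> g (c s) = c (b - s))"
    using line_iso[OF P(1) g st] by blast
  have "trl c g 0"
  proof (cases "\<forall>s. \<phi> g (c s) = c (s + b)")
    case True
    then have "c (a + b) = c a" using fx(2) aa(1) by simp
    then have "b = 0" using iso_inj[OF P(1)] by fastforce
    then show ?thesis using True g unfolding trl_def by simp
  next
    case False
    then have R: "\<forall>s. \<phi> g (c s) = c (b - s)" using b by blast
    then have "c (b - a) = c a" "c (b - a') = c a'" using fx aa by simp_all
    then have "b - a = a" "b - a' = a'" using iso_inj[OF P(1)] by blast+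
    then show ?thesis using aa0 by simp
  qed
  moreover have "trl c (h0 [^] n) (real n * \<tau>)" using trl_pow[OF P(1)] P(3) h0 unfolding trl_def by blast
  ultimately have "abelian_on G T \<phi> (generate G {g, h0 [^] n})" using abel_line[OF P(1)] by blast
  then show False using irr unfolding irreducible_on_def by simp
qed

lemma HH:
  assumes g0: "g0 \<in> carrier G" and h0: "h0 \<in> carrier G"
    and wsg: "weakly_stable G T \<phi> lam g0" and wsh: "weakly_stable G T \<phi> lam h0" and lam: "0 < lam"
    and m: "10 * max lam 1 \<le> real m" and n: "10 * max lam 1 \<le> real n"
    and irr: "irreducible_on G T \<phi> (generate G {g0 [^] m, h0 [^] n})"
    and le: "trans_len T \<phi> (h0 [^] n) \<le> trans_len T \<phi> (g0 [^] m)"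
  shows "tree_length (char_set T \<phi> (g0 [^] m) \<inter> char_set T \<phi> (h0 [^] n))
     \<le> ereal (max (trans_len T \<phi> (g0 [^] m)) (trans_len T \<phi> (h0 [^] n)) / 2)"
proof (rule ccontr)
  assume neg: "\<not> ?thesis"
  have hypg: "hyperbolic T \<phi> g0" using wsg unfolding weakly_stable_def by simp
  have hyph: "hyperbolic T \<phi> h0" using wsh unfolding weakly_stable_def by simp
  obtain cg \<tau>g where Pg: "isoline cg" "0 < \<tau>g" "\<forall>s. \<phi> g0 (cg s) = cg (s + \<tau>g)"
    "\<forall>m::nat. 0 < m \<longrightarrow> trans_len T \<phi> (g0 [^] m) = real m * \<tau>g \<and>
          char_set T \<phi> (g0 [^] m) = range cg \<and> hyperbolic T \<phi> (g0 [^] m)"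
    using hyp_pack[OF g0 hypg] by blast
  obtain ch \<tau>h where Ph: "isoline ch" "0 < \<tau>h" "\<forall>s. \<phi> h0 (ch s) = ch (s + \<tau>h)"
    "\<forall>m::nat. 0 < m \<longrightarrow> trans_len T \<phi> (h0 [^] m) = real m * \<tau>h \<and>
          char_set T \<phi> (h0 [^] m) = range ch \<and> hyperbolic T \<phi> (h0 [^] m)"
    using hyp_pack[OF h0 hyph] by blast
  have chT: "\<And>s. ch s \<in> T" and chd: "\<And>s u. dist (ch s) (ch u) = \<bar>s - u\<bar>" using Ph(1) unfolding isoline_def by auto
  have cgT: "\<And>s. cg s \<in> T" using Pg(1) unfolding isoline_def by auto
  have "1 \<le> max lam 1" "lam \<le> max lam 1" by simp_all
  then have m10: "10 \<le> real m" "10 * lam \<le> real m" and n10: "10 \<le> real n" using m n by linarith+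
  then have m0: "0 < m" and n0: "0 < n" by simp_all
  have Ag1: "char_set T \<phi> g0 = range cg" "trans_len T \<phi> g0 = \<tau>g" using Pg(4)[rule_format, of 1] g0 by simp_all
  have Agm: "char_set T \<phi> (g0 [^] m) = range cg" "trans_len T \<phi> (g0 [^] m) = real m * \<tau>g"
    using Pg(4) m0 by auto
  have Ahn: "char_set T \<phi> (h0 [^] n) = range ch" "trans_len T \<phi> (h0 [^] n) = real n * \<tau>h"
    using Ph(4) n0 by auto
  have mx: "max (trans_len T \<phi> (g0 [^] m)) (trans_len T \<phi> (h0 [^] n)) = real m * \<tau>g"
    using le Agm by simp
  have th: "10 * \<tau>h \<le> real m * \<tau>g"
  proof -
    have "10 * \<tau>h \<le> real n * \<tau>h" using n10 Ph(2) by (simp add: mult_right_mono)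
    then show ?thesis using le Agm Ahn by simp
  qed
  have "ereal (real m * \<tau>g / 2) < tree_length (range cg \<inter> range ch)"
    using neg unfolding mx unfolding Agm Ahn by (simp add: not_le)
  then have "\<exists>x\<in>range cg \<inter> range ch. \<exists>y\<in>range cg \<inter> range ch. real m * \<tau>g / 2 < dist x y"
    by (rule tlen_gt) (use Pg(2) in simp)
  then obtain p q where pq: "p \<in> range cg \<inter> range ch" "q \<in> range cg \<inter> range ch" "real m * \<tau>g / 2 < dist p q"
    by blast
  obtain a1 a2 where aa: "p = ch a1" "q = ch a2" using pq by blast
  define a where "a = min a1 a2"
  define b where "b = max a1 a2"
  have "ch a \<in> {p, q}" "ch b \<in> {p, q}" unfolding a_def b_def aa by (simp_all add: min_def max_def)
  then have ab12: "ch a \<in> range cg" "ch b \<in> range cg" using pq(1,2) by auto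
  have "b - a = \<bar>a1 - a2\<bar>" unfolding a_def b_def by (cases "a1 \<le> a2") (simp_all add: min_def max_def)
  then have "real m * \<tau>g / 2 < b - a" using pq(3) aa chd[of a1 a2] by simp
  note ab = ab12 this
  have gap: "\<tau>h \<le> b - a - \<tau>h" using ab(3) th Ph(2) by simp
  obtain a' b' where ab': "ch a = cg a'" "ch b = cg b'" using ab by blast
  have u1: "ch (a + \<tau>h) \<in> range cg"
  proof -
    have "btw (ch a) (ch (a + \<tau>h)) (ch b)" using line_btw[OF Ph(1)] gap Ph(2) by simp
    then show ?thesis using CV[OF Pg(1) chT] ab' by simp
  qed
  have u2: "ch (b - \<tau>h) \<in> range cg"
  proof -
    have "btw (ch a) (ch (b - \<tau>h)) (ch b)" using line_btw[OF Ph(1)] gap Ph(2) by simp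
    then show ?thesis using CV[OF Pg(1) chT] ab' by simp
  qed
  have "ch (a + \<tau>h) = \<phi> h0 (ch a)" using Ph(3) by simp
  then have "ch (a + \<tau>h) \<in> \<phi> h0 ` range cg" using ab(1) by blast
  then have m1: "ch (a + \<tau>h) \<in> char_set T \<phi> g0 \<inter> \<phi> h0 ` char_set T \<phi> g0" using u1 Ag1 by simp
  have "ch b = \<phi> h0 (ch (b - \<tau>h))" using Ph(3) by simp
  then have "ch b \<in> \<phi> h0 ` range cg" using u2 by blast
  then have m2: "ch b \<in> char_set T \<phi> g0 \<inter> \<phi> h0 ` char_set T \<phi> g0" using ab(2) Ag1 by simp
  have "ereal (dist (ch (a + \<tau>h)) (ch b)) \<le> tree_length (char_set T \<phi> g0 \<inter> \<phi> h0 ` char_set T \<phi> g0)"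
    using tlen_ge[OF m1 m2] .
  moreover have "lam * \<tau>g < dist (ch (a + \<tau>h)) (ch b)"
  proof -
    have d: "dist (ch (a + \<tau>h)) (ch b) = b - a - \<tau>h" using chd gap Ph(2) by simp
    have "lam * \<tau>g < 4 * lam * \<tau>g" using lam Pg(2) by simp
    also have "4 * lam * \<tau>g \<le> 2 * real m * \<tau>g / 5" using m10 Pg(2) by (simp add: mult_right_mono)
    also have "2 * real m * \<tau>g / 5 < b - a - \<tau>h" using ab(3) th by simp
    finally show ?thesis using d by simp
  qed
  ultimately have "ereal (lam * trans_len T \<phi> g0) < tree_length (char_set T \<phi> g0 \<inter> \<phi> h0 ` char_set T \<phi> g0)"
    unfolding Ag1 by (meson ereal_less_eq(3) less_ereal.simps(1) order_less_le_trans)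
  then have "h0 \<in> stab_axis G T \<phi> g0" using wsg h0 unfolding weakly_stable_def by blast
  then have st: "\<phi> h0 ` range cg = range cg" unfolding stab_axis_def Ag1 by simp
  obtain b0 where b0: "(\<forall>s. \<phi> h0 (cg s) = cg (s + b0)) \<or> (\<forall>s. \<phi> h0 (cg s) = cg (b0 - s))"
    using line_iso[OF Pg(1) h0 st] by blast
  have "trl cg h0 b0"
  proof (cases "\<forall>s. \<phi> h0 (cg s) = cg (s + b0)")
    case True then show ?thesis using h0 unfolding trl_def by simp
  next
    case False
    then have "\<phi> h0 (cg (b0 / 2)) = cg (b0 / 2)" using b0 by auto
    then have "elliptic T \<phi> h0" unfolding elliptic_def using cgT[of "b0 / 2"] by blast
    then show ?thesis using hyph unfolding hyperbolic_def by simp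
  qed
  then have "trl cg (h0 [^] n) (real n * b0)" using trl_pow[OF Pg(1)] by blast
  moreover have "trl cg (g0 [^] m) (real m * \<tau>g)" using trl_pow[OF Pg(1)] Pg(3) g0 unfolding trl_def by blast
  ultimately have "abelian_on G T \<phi> (generate G {g0 [^] m, h0 [^] n})" using abel_line[OF Pg(1)] by blast
  then show False using irr unfolding irreducible_on_def by simp
qed

end

lemma conv_pow:
  fixes G :: "('g, 'm) monoid_scheme"
  assumes "elliptic T \<phi> g \<or> (\<exists>g0\<in>carrier G. \<exists>m::int. weakly_stable G T \<phi> lam g0 \<and>
            real_of_int m \<ge> 10 * max lam 1 \<and> g = g0 [^]\<^bsub>G\<^esub> m)"
  shows "elliptic T \<phi> g \<or> (\<exists>g0 m. g0 \<in> carrier G \<and> weakly_stable G T \<phi> lam g0 \<and>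
            10 * max lam 1 \<le> real m \<and> g = g0 [^]\<^bsub>G\<^esub> (m::nat))"
proof (cases "elliptic T \<phi> g")
  case True then show ?thesis by simp
next
  case False
  then obtain g0 m where g0: "g0 \<in> carrier G" "weakly_stable G T \<phi> lam g0"
    "real_of_int m \<ge> 10 * max lam 1" "g = g0 [^]\<^bsub>G\<^esub> (m::int)" using assms by blast
  have "1 \<le> max lam 1" by simp
  then have m0: "0 \<le> m" using g0(3) by linarith
  then obtain k where k: "m = int k" using nonneg_eq_int by blast
  have "g = g0 [^]\<^bsub>G\<^esub> k" using g0(4) k by (simp add: int_pow_int)
  moreover have "10 * max lam 1 \<le> real k" using g0(3) k by simp
  ultimately show ?thesis using g0(1,2) by blast
qed

theorem mainTheorem11:
  fixes G :: "('g, 'm) monoid_scheme" and T :: "'a::metric_space set"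
    and \<phi> :: "'g \<Rightarrow> 'a \<Rightarrow> 'a" and g h :: 'g and lam :: real
  assumes "real_tree T"
    and "isometric_action G T \<phi>"
    and "g \<in> carrier G" and "h \<in> carrier G"
    and "irreducible_on G T \<phi> (generate G {g, h})"
    and "lam > 0"
    and "elliptic T \<phi> g \<or> (\<exists>g0\<in>carrier G. \<exists>m::int. weakly_stable G T \<phi> lam g0 \<and>
            real_of_int m \<ge> 10 * max lam 1 \<and> g = g0 [^]\<^bsub>G\<^esub> m)"
    and "elliptic T \<phi> h \<or> (\<exists>h0\<in>carrier G. \<exists>m::int. weakly_stable G T \<phi> lam h0 \<and>
            real_of_int m \<ge> 10 * max lam 1 \<and> h = h0 [^]\<^bsub>G\<^esub> m)"
  shows "acylindrical_pair G T \<phi> g h"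
proof -
  interpret tact T G \<phi>
    by (rule tact.intro; (rule rtree.intro, rule assms(1))?; rule tact_axioms.intro, rule assms(2))
  have g: "g \<in> carrier G" and h: "h \<in> carrier G" using assms(3,4) .
  have irr: "irreducible_on G T \<phi> (generate G {g, h})" using assms(5) .
  have irr': "irreducible_on G T \<phi> (generate G {h, g})" using irr by (simp add: insert_commute)
  have lam: "0 < lam" using assms(6) .
  have Gc: "elliptic T \<phi> g \<or> (\<exists>g0 m. g0 \<in> carrier G \<and> weakly_stable G T \<phi> lam g0 \<and>
            10 * max lam 1 \<le> real m \<and> g = g0 [^]\<^bsub>G\<^esub> (m::nat))" using conv_pow[OF assms(7)] .
  have Hc: "elliptic T \<phi> h \<or> (\<exists>g0 m. g0 \<in> carrier G \<and> weakly_stable G T \<phi> lam g0 \<and>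
            10 * max lam 1 \<le> real m \<and> h = g0 [^]\<^bsub>G\<^esub> (m::nat))" using conv_pow[OF assms(8)] .
  have ov: "tree_length (char_set T \<phi> g \<inter> char_set T \<phi> h)
        \<le> ereal (max (trans_len T \<phi> g) (trans_len T \<phi> h) / 2)"
  proof (cases "elliptic T \<phi> g")
    case ge: True
    show ?thesis
    proof (cases "elliptic T \<phi> h")
      case he: True
      show ?thesis using EE[OF g h ge he irr] .
    next
      case False
      then obtain h0 n where hn: "h0 \<in> carrier G" "weakly_stable G T \<phi> lam h0" "10 * max lam 1 \<le> real n" "h = h0 [^]\<^bsub>G\<^esub> (n::nat)"
        using Hc by blast
      show ?thesis using EH[OF g ge hn(1,2) lam hn(3)] irr unfolding hn(4) by simp
    qed
  next
    case False
    then obtain g0 m where gm: "g0 \<in> carrier G" "weakly_stable G T \<phi> lam g0" "10 * max lam 1 \<le> real m" "g = g0 [^]\<^bsub>G\<^esub> (m::nat)"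
      using Gc by blast
    show ?thesis
    proof (cases "elliptic T \<phi> h")
      case he: True
      have "tree_length (char_set T \<phi> h \<inter> char_set T \<phi> g)
        \<le> ereal (max (trans_len T \<phi> h) (trans_len T \<phi> g) / 2)"
        using EH[OF h he gm(1,2) lam gm(3)] irr' unfolding gm(4) by simp
      then show ?thesis by (simp add: Int_commute max.commute)
    next
      case False
      then obtain h0 n where hn: "h0 \<in> carrier G" "weakly_stable G T \<phi> lam h0" "10 * max lam 1 \<le> real n" "h = h0 [^]\<^bsub>G\<^esub> (n::nat)"
        using Hc by blast
      show ?thesis
      proof (cases "trans_len T \<phi> h \<le> trans_len T \<phi> g")
        case True
        show ?thesis using HH[OF gm(1) hn(1) gm(2) hn(2) lam gm(3) hn(3)] irr True unfolding gm(4) hn(4) by simp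
      next
        case False
        have "tree_length (char_set T \<phi> h \<inter> char_set T \<phi> g)
          \<le> ereal (max (trans_len T \<phi> h) (trans_len T \<phi> g) / 2)"
          using HH[OF hn(1) gm(1) hn(2) gm(2) lam hn(3) gm(3)] irr' False unfolding gm(4) hn(4) by simp
        then show ?thesis by (simp add: Int_commute max.commute)
      qed
    qed
  qed
  have wg: "hyperbolic T \<phi> g \<longrightarrow> weakly_stable G T \<phi> (1/3) g"
  proof
    assume "hyperbolic T \<phi> g"
    then obtain g0 m where gm: "g0 \<in> carrier G" "weakly_stable G T \<phi> lam g0" "10 * max lam 1 \<le> real m" "g = g0 [^]\<^bsub>G\<^esub> (m::nat)"
      using Gc unfolding hyperbolic_def by blast
    show "weakly_stable G T \<phi> (1/3) g" using ws_pow[OF gm(1,2) lam gm(3)] gm(4) by simp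
  qed
  have wh: "hyperbolic T \<phi> h \<longrightarrow> weakly_stable G T \<phi> (1/3) h"
  proof
    assume "hyperbolic T \<phi> h"
    then obtain g0 m where gm: "g0 \<in> carrier G" "weakly_stable G T \<phi> lam g0" "10 * max lam 1 \<le> real m" "h = g0 [^]\<^bsub>G\<^esub> (m::nat)"
      using Hc unfolding hyperbolic_def by blast
    show "weakly_stable G T \<phi> (1/3) h" using ws_pow[OF gm(1,2) lam gm(3)] gm(4) by simp
  qed
  show ?thesis unfolding acylindrical_pair_def using irr ov wg wh by blast
qed

end
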